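(* Let $M$ and $N$ be arbitrary discrete measure spaces, i.e. sets with all subsets measurable and measures $\mu,\nu$ given by positive masses $\mu_i=\mu(\{i\})>0$ ($i\in M$), $\nu_j=\nu(\{j\})>0$ ($j\in N$). Let $t>0$, $1\le q<p\le\infty$, $\alpha=1/q-1/p$, $C(p,q)=(1-q/p)^{1/q}$. For $a:M\times N\to\mathbb R$ let $\|a\|$ be the $L^{p,\infty}(\mu)$ quasi-norm of $i\mapsto\big(\sum_{j\in N}|a(i,j)|^q\nu_j\big)^{1/q}$ (the norm of $\ell^{p,\infty}_M(\ell^q_N)$), $\|a\|^{\top}$ the $L^{p,\infty}(\nu)$ quasi-norm of $j\mapsto\big(\sum_{i\in M}|a(i,j)|^q\mu_i\big)^{1/q}$ (the norm of $\ell^{p,\infty}_N(\ell^q_M)$ applied to the transpose), and $$|||a|||_{p,q,t}=\sup_{E,F}\big(\mu(E)^{\alpha}\vee t^{-1}\nu(F)^{\alpha}\big)^{-1}\Big(\sum_{(i,j)\in E\times F}|a(i,j)|^q\mu_i\nu_j\Big)^{1/q},$$ the supremum over $E\subset M$, $F\subset N$ of positive finite measure. Let $K_{p,q,t}(a)=\inf\{\|b\|+t\|c\|^{\top}: a=b+c\}$. Then for every $a$, $$C(p,q)\,|||a|||_{p,q,t}\le K_{p,q,t}(a)\le 2\,|||a|||_{p,q,t}.$$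
   Context: For a nonnegative function $g$ on a measure space, $g^*(s)=\inf\{\lambda>0:\text{measure}\{g>\lambda\}\le s\}$ and $\|g\|_{L^{p,\infty}}=\sup_{s>0}s^{1/p}g^*(s)$ (the sup norm when $p=\infty$). $u\vee v=\max(u,v)$. *)

theory Defs
  imports "HOL-Analysis.Analysis"
begin

definition disc_measure :: "('a \<Rightarrow> real) \<Rightarrow> 'a measure" where
  "disc_measure w = density (count_space UNIV) (\<lambda>i. ennreal (w i))"

definition epow :: "ennreal \<Rightarrow> real \<Rightarrow> ennreal" where
  "epow x r = (if x = \<infinity> then \<infinity> else ennreal (enn2real x powr r))"

definition rearr :: "'a measure \<Rightarrow> ('a \<Rightarrow> ennreal) \<Rightarrow> real \<Rightarrow> ennreal" where
  "rearr M g s = Inf {l. 0 < l \<and> emeasure M {x \<in> space M. g x > l} \<le> ennreal s}"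

definition weak_norm :: "'a measure \<Rightarrow> ennreal \<Rightarrow> ('a \<Rightarrow> ennreal) \<Rightarrow> ennreal" where
  "weak_norm M p g = (if p = \<infinity> then (SUP x\<in>space M. g x)
     else (SUP s\<in>{0<..}. ennreal (s powr (1 / enn2real p)) * rearr M g s))"

definition mixed_norm :: "('m \<Rightarrow> real) \<Rightarrow> ('n \<Rightarrow> real) \<Rightarrow> ennreal \<Rightarrow> real
    \<Rightarrow> ('m \<Rightarrow> 'n \<Rightarrow> real) \<Rightarrow> ennreal" where
  "mixed_norm \<mu> \<nu> p q a = weak_norm (disc_measure \<mu>) p
     (\<lambda>i. epow (\<integral>\<^sup>+ j. ennreal (\<bar>a i j\<bar> powr q) \<partial>disc_measure \<nu>) (1 / q))"

definition triple_norm :: "('m \<Rightarrow> real) \<Rightarrow> ('n \<Rightarrow> real) \<Rightarrow> ennreal \<Rightarrow> real \<Rightarrow> real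
    \<Rightarrow> ('m \<Rightarrow> 'n \<Rightarrow> real) \<Rightarrow> ennreal" where
  "triple_norm \<mu> \<nu> p q t a =
    (let \<alpha> = 1 / q - enn2real (inverse p) in
     SUP EF\<in>{(E, F). 0 < emeasure (disc_measure \<mu>) E \<and> emeasure (disc_measure \<mu>) E < \<infinity>
                  \<and> 0 < emeasure (disc_measure \<nu>) F \<and> emeasure (disc_measure \<nu>) F < \<infinity>}.
       ennreal (1 / max (measure (disc_measure \<mu>) (fst EF) powr \<alpha>)
                        (measure (disc_measure \<nu>) (snd EF) powr \<alpha> / t))
       * epow (\<integral>\<^sup>+ i\<in>fst EF. (\<integral>\<^sup>+ j\<in>snd EF. ennreal (\<bar>a i j\<bar> powr q) \<partial>disc_measure \<nu>)
                 \<partial>disc_measure \<mu>) (1 / q))"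

definition K_func :: "('m \<Rightarrow> real) \<Rightarrow> ('n \<Rightarrow> real) \<Rightarrow> ennreal \<Rightarrow> real \<Rightarrow> real
    \<Rightarrow> ('m \<Rightarrow> 'n \<Rightarrow> real) \<Rightarrow> ennreal" where
  "K_func \<mu> \<nu> p q t a =
    (INF bc\<in>{(b, c). \<forall>i j. a i j = b i j + c i j}.
       mixed_norm \<mu> \<nu> p q (fst bc) + ennreal t * mixed_norm \<nu> \<mu> p q (\<lambda>j i. snd bc i j))"

end

theory Submission
  imports Defs "HOL-Analysis.Analysis"
begin

lemma nn_count_le:
  fixes g :: "'a \<Rightarrow> ennreal"
  assumes fs: "\<And>F. finite F \<Longrightarrow> sum g F \<le> B"
  shows "(\<integral>\<^sup>+x. g x \<partial>count_space UNIV) \<le> B"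
proof (cases "B = \<infinity>")
  case True then show ?thesis by simp
next
  case False
  then obtain b where Bb: "B = ennreal b" and b0: "b \<ge> 0" by (cases B) auto
  have gfin: "g x = ennreal (enn2real (g x))" for x
  proof -
    have "g x \<le> B" using fs[of "{x}"] by simp
    then show ?thesis using False by (cases "g x") (auto simp: top_unique)
  qed
  define g' where "g' x = enn2real (g x)" for x
  have fs': "sum g' F \<le> b" if "finite F" for F
  proof -
    have "ennreal (sum g' F) = sum g F"
      using gfin by (subst sum_ennreal[symmetric]) (auto simp: g'_def enn2real_nonneg intro!: sum.cong)
    then have "ennreal (sum g' F) \<le> ennreal b" using fs[OF that] Bb by simp
    then show ?thesis using b0 by (simp add: ennreal_le_iff)
  qed
  have summ: "Infinite_Set_Sum.abs_summable_on g' UNIV"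
    by (rule abs_summable_finite_sumsI[where B=b]) (use fs' in \<open>simp add: g'_def\<close>)
  have "(\<integral>\<^sup>+x. g x \<partial>count_space UNIV) = (\<integral>\<^sup>+x. ennreal (g' x) \<partial>count_space UNIV)"
    using gfin by (simp add: g'_def)
  also have "\<dots> = ennreal (infsetsum g' UNIV)"
    by (rule nn_integral_conv_infsetsum[OF summ]) (simp add: g'_def)
  also have "\<dots> = (SUP F\<in>{F. finite F \<and> F \<subseteq> UNIV}. ennreal (sum g' F))"
    by (rule infsetsum_nonneg_is_SUPREMUM_ennreal[OF summ]) (simp add: g'_def)
  also have "\<dots> \<le> B" using fs' Bb by (intro SUP_least) (auto intro: ennreal_leI)
  finally show ?thesis .
qed

lemma sum_le_nn_count:
  fixes g :: "'a \<Rightarrow> ennreal"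
  assumes "finite F"
  shows "sum g F \<le> (\<integral>\<^sup>+x. g x \<partial>count_space UNIV)"
proof -
  have "sum g F = (\<integral>\<^sup>+x. g x \<partial>count_space F)" using assms by (simp add: nn_integral_count_space_finite)
  also have "\<dots> = (\<integral>\<^sup>+x. g x * indicator F x \<partial>count_space UNIV)" by (simp add: nn_integral_count_space_indicator)
  also have "\<dots> \<le> (\<integral>\<^sup>+x. g x \<partial>count_space UNIV)" by (intro nn_integral_mono) (auto simp: indicator_def)
  finally show ?thesis .
qed

definition hypR :: "('a \<Rightarrow> 'b \<Rightarrow> real) \<Rightarrow> ('a \<Rightarrow> real) \<Rightarrow> ('b \<Rightarrow> real) \<Rightarrow> real \<Rightarrow> real \<Rightarrow> real
   \<Rightarrow> 'a set \<Rightarrow> 'b set \<Rightarrow> bool" where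
  "hypR W mu nu h K1 K2 R C \<longleftrightarrow> (\<forall>E F. E \<subseteq> R \<longrightarrow> F \<subseteq> C \<longrightarrow> E \<noteq> {} \<longrightarrow> F \<noteq> {} \<longrightarrow>
     (\<Sum>i\<in>E. \<Sum>j\<in>F. W i j * mu i * nu j) \<le> max (K1 * sum mu E powr (1 - h)) (K2 * sum nu F powr (1 - h)))"

lemma sum_pos_not_close:
  fixes mu :: "'a \<Rightarrow> real"
  assumes fin: "finite R" and ne: "R \<noteq> {}" and pos: "\<And>i. mu i > 0" and hh: "h \<ge> 0"
    and big: "\<And>i. i \<in> R \<Longrightarrow> sum mu R powr h * s i > K"
  shows "(\<Sum>i\<in>R. mu i * s i) > K * sum mu R powr (1 - h)"
proof -
  have mR: "sum mu R > 0" using fin ne pos by (simp add: sum_pos)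
  have ph: "sum mu R powr h > 0" using mR by simp
  have "K * sum mu R = (\<Sum>i\<in>R. mu i * K)" by (simp add: sum_distrib_left sum_distrib_right mult.commute)
  also have "\<dots> < (\<Sum>i\<in>R. mu i * (sum mu R powr h * s i))"
    using fin ne by (intro sum_strict_mono) (auto intro!: mult_strict_left_mono big pos)
  also have "\<dots> = sum mu R powr h * (\<Sum>i\<in>R. mu i * s i)"
    by (simp add: sum_distrib_left mult_ac)
  finally have "K * sum mu R < sum mu R powr h * (\<Sum>i\<in>R. mu i * s i)" .
  moreover have "sum mu R = sum mu R powr h * sum mu R powr (1 - h)"
    using mR by (simp add: powr_add[symmetric])
  ultimately have "sum mu R powr h * (K * sum mu R powr (1 - h)) < sum mu R powr h * (\<Sum>i\<in>R. mu i * s i)"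
    by (simp add: mult_ac)
  then show ?thesis using ph by simp
qed

lemma greedy:
  fixes W :: "'a \<Rightarrow> 'b \<Rightarrow> real" and mu :: "'a \<Rightarrow> real" and nu :: "'b \<Rightarrow> real"
  assumes Wnn: "\<And>i j. W i j \<ge> 0" and mupos: "\<And>i. mu i > 0" and nupos: "\<And>j. nu j > 0"
    and hh: "h \<ge> 0" and K1: "K1 \<ge> 0" and K2: "K2 \<ge> 0"
  shows "finite R \<Longrightarrow> finite C \<Longrightarrow> hypR W mu nu h K1 K2 R C \<Longrightarrow>
    \<exists>X. (\<forall>E. E \<subseteq> R \<longrightarrow> E \<noteq> {} \<longrightarrow> (\<exists>i\<in>E. sum mu E powr h * (\<Sum>j\<in>C. if (i,j) \<in> X then W i j * nu j else 0) \<le> K1))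
      \<and> (\<forall>F. F \<subseteq> C \<longrightarrow> F \<noteq> {} \<longrightarrow> (\<exists>j\<in>F. sum nu F powr h * (\<Sum>i\<in>R. if (i,j) \<in> X then 0 else W i j * mu i) \<le> K2))"
proof (induction "card R + card C" arbitrary: R C rule: less_induct)
  case less
  note finR = less.prems(1) and finC = less.prems(2) and H = less.prems(3)
  show ?case
  proof (cases "R = {} \<or> C = {}")
    case True
    then show ?thesis
    proof
      assume "R = {}" then show ?thesis using K2 by (intro exI[of _ "{}"]) auto
    next
      assume "C = {}" then show ?thesis using K1 by (intro exI[of _ "{}"]) auto
    qed
  next
    case False
    then have Rne: "R \<noteq> {}" and Cne: "C \<noteq> {}" by auto
    have mRpos: "sum mu R > 0" using finR Rne mupos by (simp add: sum_pos)
    have nCpos: "sum nu C > 0" using finC Cne nupos by (simp add: sum_pos)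
    have "(\<exists>i\<in>R. sum mu R powr h * (\<Sum>j\<in>C. W i j * nu j) \<le> K1)
        \<or> (\<exists>j\<in>C. sum nu C powr h * (\<Sum>i\<in>R. W i j * mu i) \<le> K2)"
    proof (rule ccontr)
      assume "\<not> ?thesis"
      then have r: "\<And>i. i \<in> R \<Longrightarrow> sum mu R powr h * (\<Sum>j\<in>C. W i j * nu j) > K1"
        and c: "\<And>j. j \<in> C \<Longrightarrow> sum nu C powr h * (\<Sum>i\<in>R. W i j * mu i) > K2"
        by (auto simp: not_le)
      have 1: "(\<Sum>i\<in>R. mu i * (\<Sum>j\<in>C. W i j * nu j)) > K1 * sum mu R powr (1 - h)"
        by (rule sum_pos_not_close[OF finR Rne mupos hh r])
      have 2: "(\<Sum>j\<in>C. nu j * (\<Sum>i\<in>R. W i j * mu i)) > K2 * sum nu C powr (1 - h)"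
        by (rule sum_pos_not_close[OF finC Cne nupos hh c])
      have e1: "(\<Sum>i\<in>R. mu i * (\<Sum>j\<in>C. W i j * nu j)) = (\<Sum>i\<in>R. \<Sum>j\<in>C. W i j * mu i * nu j)"
        by (simp add: sum_distrib_left mult_ac)
      have e2: "(\<Sum>j\<in>C. nu j * (\<Sum>i\<in>R. W i j * mu i)) = (\<Sum>i\<in>R. \<Sum>j\<in>C. W i j * mu i * nu j)"
        by (simp add: sum_distrib_left mult_ac sum.swap[of _ C R])
      have "(\<Sum>i\<in>R. \<Sum>j\<in>C. W i j * mu i * nu j) \<le> max (K1 * sum mu R powr (1 - h)) (K2 * sum nu C powr (1 - h))"
        using H Rne Cne unfolding hypR_def by blast
      then show False using 1 2 e1 e2 by linarith
    qed
    then show ?thesis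
    proof
      assume "\<exists>i\<in>R. sum mu R powr h * (\<Sum>j\<in>C. W i j * nu j) \<le> K1"
      then obtain i where iR: "i \<in> R" and icl: "sum mu R powr h * (\<Sum>j\<in>C. W i j * nu j) \<le> K1" by blast
      let ?R' = "R - {i}"
      have "card ?R' + card C < card R + card C" using card_Diff1_less[OF finR iR] by simp
      moreover have "hypR W mu nu h K1 K2 ?R' C" using H unfolding hypR_def by blast
      ultimately obtain X' where
        X'1: "\<forall>E. E \<subseteq> ?R' \<longrightarrow> E \<noteq> {} \<longrightarrow> (\<exists>i\<in>E. sum mu E powr h * (\<Sum>j\<in>C. if (i,j) \<in> X' then W i j * nu j else 0) \<le> K1)"
        and X'2: "\<forall>F. F \<subseteq> C \<longrightarrow> F \<noteq> {} \<longrightarrow> (\<exists>j\<in>F. sum nu F powr h * (\<Sum>i\<in>?R'. if (i,j) \<in> X' then 0 else W i j * mu i) \<le> K2)"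
        using less.hyps finR finC by blast
      define X where "X = (X' - {i} \<times> UNIV) \<union> {i} \<times> UNIV"
      have memX: "(i',j) \<in> X \<longleftrightarrow> (i' = i \<or> (i',j) \<in> X')" for i' j unfolding X_def by auto
      show ?thesis
      proof (intro exI[of _ X] conjI allI impI)
        fix E assume ER: "E \<subseteq> R" and Ene: "E \<noteq> {}"
        show "\<exists>i\<in>E. sum mu E powr h * (\<Sum>j\<in>C. if (i,j) \<in> X then W i j * nu j else 0) \<le> K1"
        proof (cases "i \<in> E")
          case True
          have fE: "finite E" using ER finR finite_subset by blast
          have mE: "sum mu E > 0" using fE Ene mupos by (simp add: sum_pos)
          have "sum mu E \<le> sum mu R" using ER finR mupos by (intro sum_mono2) (auto intro: less_imp_le)
          then have "sum mu E powr h \<le> sum mu R powr h" using mE hh by (intro powr_mono2) auto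
          moreover have "(\<Sum>j\<in>C. W i j * nu j) \<ge> 0" using Wnn nupos by (intro sum_nonneg) (simp add: less_imp_le)
          ultimately have "sum mu E powr h * (\<Sum>j\<in>C. W i j * nu j) \<le> K1"
            using icl by (meson mult_right_mono order_trans)
          then show ?thesis using True by (intro bexI[of _ i]) (auto simp: memX)
        next
          case False
          then have "E \<subseteq> ?R'" using ER by auto
          then obtain i' where "i' \<in> E" and le: "sum mu E powr h * (\<Sum>j\<in>C. if (i',j) \<in> X' then W i' j * nu j else 0) \<le> K1"
            using X'1 Ene by blast
          moreover have "i' \<noteq> i" using False \<open>i' \<in> E\<close> by auto
          ultimately show ?thesis by (intro bexI[of _ i']) (auto simp: memX)
        qed
      next
        fix F assume FC: "F \<subseteq> C" and Fne: "F \<noteq> {}"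
        obtain j where jF: "j \<in> F" and le: "sum nu F powr h * (\<Sum>i\<in>?R'. if (i,j) \<in> X' then 0 else W i j * mu i) \<le> K2"
          using X'2 FC Fne by blast
        have "(\<Sum>i'\<in>R. if (i',j) \<in> X then 0 else W i' j * mu i') = (\<Sum>i'\<in>?R'. if (i',j) \<in> X then 0 else W i' j * mu i')"
          using iR finR by (subst sum.remove[of R i]) (auto simp: memX)
        also have "\<dots> = (\<Sum>i'\<in>?R'. if (i',j) \<in> X' then 0 else W i' j * mu i')"
          by (intro sum.cong) (auto simp: memX)
        finally show "\<exists>j\<in>F. sum nu F powr h * (\<Sum>i\<in>R. if (i,j) \<in> X then 0 else W i j * mu i) \<le> K2"
          using jF le by (intro bexI[of _ j]) auto
      qed
    next
      assume "\<exists>j\<in>C. sum nu C powr h * (\<Sum>i\<in>R. W i j * mu i) \<le> K2"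
      then obtain j where jC: "j \<in> C" and jcl: "sum nu C powr h * (\<Sum>i\<in>R. W i j * mu i) \<le> K2" by blast
      let ?C' = "C - {j}"
      have "card R + card ?C' < card R + card C" using card_Diff1_less[OF finC jC] by simp
      moreover have "hypR W mu nu h K1 K2 R ?C'" using H unfolding hypR_def by blast
      ultimately obtain X' where
        X'1: "\<forall>E. E \<subseteq> R \<longrightarrow> E \<noteq> {} \<longrightarrow> (\<exists>i\<in>E. sum mu E powr h * (\<Sum>j\<in>?C'. if (i,j) \<in> X' then W i j * nu j else 0) \<le> K1)"
        and X'2: "\<forall>F. F \<subseteq> ?C' \<longrightarrow> F \<noteq> {} \<longrightarrow> (\<exists>j\<in>F. sum nu F powr h * (\<Sum>i\<in>R. if (i,j) \<in> X' then 0 else W i j * mu i) \<le> K2)"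
        using less.hyps finR finC by blast
      define X where "X = X' - UNIV \<times> {j}"
      have memX: "(i,j') \<in> X \<longleftrightarrow> (j' \<noteq> j \<and> (i,j') \<in> X')" for i j' unfolding X_def by auto
      show ?thesis
      proof (intro exI[of _ X] conjI allI impI)
        fix F assume FC: "F \<subseteq> C" and Fne: "F \<noteq> {}"
        show "\<exists>j\<in>F. sum nu F powr h * (\<Sum>i\<in>R. if (i,j) \<in> X then 0 else W i j * mu i) \<le> K2"
        proof (cases "j \<in> F")
          case True
          have fF: "finite F" using FC finC finite_subset by blast
          have mF: "sum nu F > 0" using fF Fne nupos by (simp add: sum_pos)
          have "sum nu F \<le> sum nu C" using FC finC nupos by (intro sum_mono2) (auto intro: less_imp_le)
          then have "sum nu F powr h \<le> sum nu C powr h" using mF hh by (intro powr_mono2) auto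
          moreover have "(\<Sum>i\<in>R. W i j * mu i) \<ge> 0" using Wnn mupos by (intro sum_nonneg) (simp add: less_imp_le)
          ultimately have "sum nu F powr h * (\<Sum>i\<in>R. W i j * mu i) \<le> K2"
            using jcl by (meson mult_right_mono order_trans)
          then show ?thesis using True by (intro bexI[of _ j]) (auto simp: memX)
        next
          case False
          then have "F \<subseteq> ?C'" using FC by auto
          then obtain j' where "j' \<in> F" and le: "sum nu F powr h * (\<Sum>i\<in>R. if (i,j') \<in> X' then 0 else W i j' * mu i) \<le> K2"
            using X'2 Fne by blast
          moreover have "j' \<noteq> j" using False \<open>j' \<in> F\<close> by auto
          ultimately show ?thesis by (intro bexI[of _ j']) (auto simp: memX)
        qed
      next
        fix E assume ER: "E \<subseteq> R" and Ene: "E \<noteq> {}"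
        obtain i where iE: "i \<in> E" and le: "sum mu E powr h * (\<Sum>j\<in>?C'. if (i,j) \<in> X' then W i j * nu j else 0) \<le> K1"
          using X'1 ER Ene by blast
        have "(\<Sum>j'\<in>C. if (i,j') \<in> X then W i j' * nu j' else 0) = (\<Sum>j'\<in>?C'. if (i,j') \<in> X then W i j' * nu j' else 0)"
          using jC finC by (subst sum.remove[of C j]) (auto simp: memX)
        also have "\<dots> = (\<Sum>j'\<in>?C'. if (i,j') \<in> X' then W i j' * nu j' else 0)"
          by (intro sum.cong) (auto simp: memX)
        finally show "\<exists>i\<in>E. sum mu E powr h * (\<Sum>j\<in>C. if (i,j) \<in> X then W i j * nu j else 0) \<le> K1"
          using iE le by (intro bexI[of _ i]) auto
      qed
    qed
  qed
qed

lemma concave_step: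
  fixes a b h :: real
  assumes "0 \<le> a" "a \<le> b" "0 < b" "0 \<le> h" "h < 1"
  shows "(b - a) * b powr (-h) \<le> (b powr (1 - h) - a powr (1 - h)) / (1 - h)"
proof -
  define u where "u = a / b"
  have u0: "0 \<le> u" and u1: "u \<le> 1" using assms by (auto simp: u_def field_simps)
  have key: "u powr (1 - h) \<le> (1 - h) * u + h"
  proof (cases "u = 0")
    case True then show ?thesis using assms by simp
  next
    case False
    then have "u powr (1 - h) * 1 powr h \<le> (1 - h) * u + h * 1"
      using u0 assms by (intro Youngs_inequality_0) auto
    then show ?thesis by simp
  qed
  have a_eq: "a = u * b" using assms by (simp add: u_def)
  have "a powr (1 - h) = u powr (1 - h) * b powr (1 - h)"
    using a_eq u0 assms by (simp add: powr_mult)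
  also have "\<dots> \<le> ((1 - h) * u + h) * b powr (1 - h)"
    using key by (intro mult_right_mono) auto
  finally have A: "a powr (1 - h) \<le> ((1 - h) * u + h) * b powr (1 - h)" .
  have bb: "b powr (1 - h) = b * b powr (-h)" using assms by (simp add: powr_diff powr_minus field_simps)
  have "(1 - h) * ((b - a) * b powr (-h)) = (1 - h) * (1 - u) * (b * b powr (-h))"
    using a_eq by (simp add: algebra_simps)
  also have "\<dots> = b powr (1 - h) - ((1 - h) * u + h) * b powr (1 - h)"
    using bb by (simp add: algebra_simps)
  also have "\<dots> \<le> b powr (1 - h) - a powr (1 - h)" using A by simp
  finally show ?thesis using assms by (simp add: field_simps)
qed

lemma FI:
  fixes mu :: "'a \<Rightarrow> real" and s :: "'a \<Rightarrow> real"
  assumes mupos: "\<And>i. mu i > 0" and snn: "\<And>i. s i \<ge> 0" and hh: "0 \<le> h" "h < 1"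
    and P: "\<And>E. finite E \<Longrightarrow> E \<noteq> {} \<Longrightarrow> \<exists>i\<in>E. sum mu E powr h * s i \<le> K"
  shows "finite E \<Longrightarrow> (\<Sum>i\<in>E. mu i * s i) \<le> K * sum mu E powr (1 - h) / (1 - h)"
proof (induction "card E" arbitrary: E rule: less_induct)
  case less
  show ?case
  proof (cases "E = {}")
    case True then show ?thesis by simp
  next
    case False
    obtain i where iE: "i \<in> E" and ile: "sum mu E powr h * s i \<le> K" using P[OF less.prems False] by blast
    let ?E' = "E - {i}"
    have IH: "(\<Sum>i\<in>?E'. mu i * s i) \<le> K * sum mu ?E' powr (1 - h) / (1 - h)"
      using less.hyps[of ?E'] card_Diff1_less[OF less.prems iE] less.prems by auto
    have b: "sum mu E > 0" using less.prems False mupos by (simp add: sum_pos)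
    have sE: "sum mu E = mu i + sum mu ?E'" using less.prems iE by (simp add: sum.remove)
    have a0: "sum mu ?E' \<ge> 0" using mupos by (intro sum_nonneg) (simp add: less_imp_le)
    have K0: "K \<ge> 0" using ile b snn[of i] by (meson order_trans powr_ge_zero zero_le_mult_iff)
    have si: "s i \<le> K * sum mu E powr (-h)"
      using ile b by (simp add: powr_minus field_simps)
    have "(\<Sum>i\<in>E. mu i * s i) = mu i * s i + (\<Sum>i\<in>?E'. mu i * s i)"
      using less.prems iE by (simp add: sum.remove)
    also have "\<dots> \<le> mu i * (K * sum mu E powr (-h)) + K * sum mu ?E' powr (1 - h) / (1 - h)"
      using IH si mupos[of i] by (intro add_mono mult_left_mono) auto
    also have "\<dots> = K * ((sum mu E - sum mu ?E') * sum mu E powr (-h) + sum mu ?E' powr (1 - h) / (1 - h))"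
      using sE by (simp add: algebra_simps)
    also have "\<dots> \<le> K * ((sum mu E powr (1 - h) - sum mu ?E' powr (1 - h)) / (1 - h) + sum mu ?E' powr (1 - h) / (1 - h))"
      using concave_step[of "sum mu ?E'" "sum mu E" h] a0 sE mupos[of i] b hh K0
      by (intro mult_left_mono add_right_mono) auto
    also have "\<dots> = K * sum mu E powr (1 - h) / (1 - h)"
      by (simp add: add_divide_distrib[symmetric])
    finally show ?thesis .
  qed
qed

lemma pow_split:
  fixes x y l q :: real
  assumes "0 \<le> x" "0 \<le> y" "0 < l" "l < 1" "1 \<le> q"
  shows "(x + y) powr q \<le> l powr (1 - q) * x powr q + (1 - l) powr (1 - q) * y powr q"
proof (cases "x = 0 \<or> y = 0")
  case True
  have g0: "z powr (1 - q) \<ge> 1" if "0 < z" "z < 1" for z :: real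
  proof -
    have "z powr (q - 1) \<le> 1" using that assms by (intro powr_le1) auto
    moreover have "z powr (q - 1) > 0" using that by simp
    moreover have "z powr (1 - q) = inverse (z powr (q - 1))"
      using that by (simp add: powr_minus[symmetric])
    ultimately show ?thesis by (simp add: one_le_inverse)
  qed
  have g1: "l powr (1 - q) \<ge> 1" "(1 - l) powr (1 - q) \<ge> 1"
    using assms by (auto intro!: g0)
  show ?thesis
  proof (cases "x = 0")
    case True
    then show ?thesis using g1 assms by (simp add: powr_ge_zero)
       (metis mult_le_cancel_right1 powr_ge_zero order.trans mult_right_mono mult_1 )
  next
    case False
    then have "y = 0" using \<open>x = 0 \<or> y = 0\<close> by simp
    then show ?thesis using g1 assms
      by simp (metis mult_right_mono powr_ge_zero mult_1)
  qed
next
  case False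
  then have xp: "x > 0" and yp: "y > 0" using assms by auto
  have ee: "(1 - l) *\<^sub>R (y / (1 - l)) + l *\<^sub>R (x / l) = x + y" using assms by simp
  have "(x + y) powr q = ((1 - l) *\<^sub>R (y / (1 - l)) + l *\<^sub>R (x / l)) powr q"
    by (simp only: ee)
  also have "\<dots> \<le> (1 - l) * (y / (1 - l)) powr q + l * (x / l) powr q"
    using assms xp yp by (intro convex_onD[OF powr_convex]) auto
  also have "\<dots> = l powr (1 - q) * x powr q + (1 - l) powr (1 - q) * y powr q"
    using assms xp yp by (simp add: powr_divide powr_diff field_simps)
  finally show ?thesis .
qed

lemma ratio_pow:
  fixes a s q :: real
  assumes "a > 0" "s > 0"
  shows "(a / s) powr (1 - q) * a powr q = a * s powr (q - 1)"
proof -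
  have "(a / s) powr (1 - q) = a powr (1 - q) / s powr (1 - q)" using assms by (simp add: powr_divide)
  moreover have "a powr (1 - q) * a powr q = a" using assms by (simp add: powr_add[symmetric])
  moreover have "1 / s powr (1 - q) = s powr (q - 1)" using assms by (simp add: powr_minus_divide[symmetric])
  ultimately show ?thesis by (metis (no_types, lifting) mult.commute times_divide_eq_left times_divide_eq_right mult.left_commute mult_1)
qed

lemma minkowski_fin:
  fixes w beta gamma :: "'k \<Rightarrow> real"
  assumes fin: "finite S" and w: "\<And>k. w k \<ge> 0" and q: "1 \<le> q" and P: "P \<ge> 0" and Q: "Q \<ge> 0"
    and hb: "(\<Sum>k\<in>S. w k * \<bar>beta k\<bar> powr q) \<le> P powr q"
    and hc: "(\<Sum>k\<in>S. w k * \<bar>gamma k\<bar> powr q) \<le> Q powr q"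
  shows "(\<Sum>k\<in>S. w k * \<bar>beta k + gamma k\<bar> powr q) \<le> (P + Q) powr q"
proof -
  define D where "D = (\<Sum>k\<in>S. w k * \<bar>beta k + gamma k\<bar> powr q)"
  have D0: "D \<ge> 0" unfolding D_def using w by (intro sum_nonneg) simp
  have "D powr (1 / q) \<le> P + Q"
  proof (rule field_le_epsilon)
    fix e :: real assume e: "0 < e"
    define P' where "P' = P + e / 2"
    define Q' where "Q' = Q + e / 2"
    have P'p: "P' > 0" and Q'p: "Q' > 0" using P Q e by (auto simp: P'_def Q'_def)
    define l where "l = P' / (P' + Q')"
    have l0: "0 < l" and l1: "l < 1" using P'p Q'p by (auto simp: l_def field_simps)
    have "D \<le> (\<Sum>k\<in>S. w k * (l powr (1 - q) * \<bar>beta k\<bar> powr q + (1 - l) powr (1 - q) * \<bar>gamma k\<bar> powr q))"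
      unfolding D_def
    proof (intro sum_mono mult_left_mono w)
      fix k
      have "\<bar>beta k + gamma k\<bar> powr q \<le> (\<bar>beta k\<bar> + \<bar>gamma k\<bar>) powr q"
        using q by (intro powr_mono2) auto
      also have "\<dots> \<le> l powr (1 - q) * \<bar>beta k\<bar> powr q + (1 - l) powr (1 - q) * \<bar>gamma k\<bar> powr q"
        using l0 l1 q by (intro pow_split) auto
      finally show "\<bar>beta k + gamma k\<bar> powr q \<le> l powr (1 - q) * \<bar>beta k\<bar> powr q + (1 - l) powr (1 - q) * \<bar>gamma k\<bar> powr q" .
    qed
    also have "\<dots> = l powr (1 - q) * (\<Sum>k\<in>S. w k * \<bar>beta k\<bar> powr q) + (1 - l) powr (1 - q) * (\<Sum>k\<in>S. w k * \<bar>gamma k\<bar> powr q)"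
      by (simp add: sum.distrib sum_distrib_left algebra_simps)
    also have "\<dots> \<le> l powr (1 - q) * P' powr q + (1 - l) powr (1 - q) * Q' powr q"
    proof (intro add_mono mult_left_mono)
      show "(\<Sum>k\<in>S. w k * \<bar>beta k\<bar> powr q) \<le> P' powr q"
        using hb P e q powr_mono2[of q P P'] by (simp add: P'_def)
      show "(\<Sum>k\<in>S. w k * \<bar>gamma k\<bar> powr q) \<le> Q' powr q"
        using hc Q e q powr_mono2[of q Q Q'] by (simp add: Q'_def)
    qed auto
    also have "\<dots> = (P' + Q') powr q"
    proof -
      have sP: "P' + Q' > 0" using P'p Q'p by simp
      have 1: "l powr (1 - q) * P' powr q = P' * (P' + Q') powr (q - 1)"
        using P'p sP unfolding l_def by (rule ratio_pow)
      have 2: "(1 - l) = Q' / (P' + Q')" using sP by (simp add: l_def field_simps)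
      have 3: "(1 - l) powr (1 - q) * Q' powr q = Q' * (P' + Q') powr (q - 1)"
        unfolding 2 using Q'p sP by (rule ratio_pow)
      have "(P' + Q') powr q = (P' + Q') * (P' + Q') powr (q - 1)"
        using sP by (simp add: powr_diff field_simps)
      then show ?thesis using 1 3 by (simp add: algebra_simps)
    qed
    finally have "D \<le> (P' + Q') powr q" .
    then have "D powr (1 / q) \<le> ((P' + Q') powr q) powr (1 / q)"
      using D0 q by (intro powr_mono2) auto
    also have "\<dots> = P' + Q'" using P'p Q'p q by (simp add: powr_powr)
    finally show "D powr (1 / q) \<le> P + Q + e" by (simp add: P'_def Q'_def)
  qed
  then have "(D powr (1 / q)) powr q \<le> (P + Q) powr q"
    using q by (intro powr_mono2) auto
  then show ?thesis using D0 q by (simp add: powr_powr D_def)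
qed

lemma disc_space[simp]: "space (disc_measure w) = UNIV"
  by (simp add: disc_measure_def)

lemma disc_sets[simp]: "sets (disc_measure w) = UNIV"
  by (simp add: disc_measure_def)

lemma disc_nn: "(\<integral>\<^sup>+x. f x \<partial>disc_measure w) = (\<integral>\<^sup>+x. ennreal (w x) * f x \<partial>count_space UNIV)"
  unfolding disc_measure_def by (rule nn_integral_density) auto

lemma disc_emeasure: "emeasure (disc_measure w) E = (\<integral>\<^sup>+x. ennreal (w x) * indicator E x \<partial>count_space UNIV)"
  unfolding disc_measure_def by (rule emeasure_density) auto

lemma disc_emeasure_fin:
  assumes "finite E" "\<And>x. w x \<ge> 0"
  shows "emeasure (disc_measure w) E = ennreal (sum w E)"
proof -
  have "emeasure (disc_measure w) E = (\<Sum>x\<in>E. ennreal (w x) * indicator E x)"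
    unfolding disc_emeasure using assms by (intro nn_integral_count_space') auto
  also have "\<dots> = (\<Sum>x\<in>E. ennreal (w x))" by (intro sum.cong) auto
  also have "\<dots> = ennreal (sum w E)" using assms by (simp add: sum_ennreal)
  finally show ?thesis .
qed

lemma disc_measure_fin:
  assumes "finite E" "\<And>x. w x \<ge> 0"
  shows "measure (disc_measure w) E = sum w E"
  using disc_emeasure_fin[OF assms] assms by (simp add: measure_def sum_nonneg)

lemma disc_emeasure_le:
  assumes w: "\<And>x. w x \<ge> 0" and B: "\<And>F. finite F \<Longrightarrow> F \<subseteq> E \<Longrightarrow> sum w F \<le> B"
  shows "emeasure (disc_measure w) E \<le> ennreal B"
  unfolding disc_emeasure
proof (rule nn_count_le)
  fix F :: "'a set" assume F: "finite F"
  have "(\<Sum>x\<in>F. ennreal (w x) * indicator E x) = (\<Sum>x\<in>F \<inter> E. ennreal (w x))"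
    using F by (simp add: sum.inter_restrict indicator_def of_bool_def if_distrib cong: if_cong)
  also have "\<dots> = ennreal (sum w (F \<inter> E))" using w by (simp add: sum_ennreal)
  also have "\<dots> \<le> ennreal B" using B[of "F \<inter> E"] F by (auto intro: ennreal_leI)
  finally show "(\<Sum>x\<in>F. ennreal (w x) * indicator E x) \<le> ennreal B" .
qed

lemma disc_emeasure_ge_fin:
  assumes "finite F" "F \<subseteq> E" "\<And>x. w x \<ge> 0"
  shows "ennreal (sum w F) \<le> emeasure (disc_measure w) E"
  using emeasure_mono[of F E "disc_measure w"] disc_emeasure_fin[of F w] assms by simp

lemma disc_int_ge_fin:
  assumes "finite J" "\<And>x. w x \<ge> 0" "\<And>x. f x \<ge> 0"
  shows "ennreal (\<Sum>j\<in>J. f j * w j) \<le> (\<integral>\<^sup>+x. ennreal (f x) \<partial>disc_measure w)"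
proof -
  have "ennreal (\<Sum>j\<in>J. f j * w j) = (\<Sum>j\<in>J. ennreal (w j) * ennreal (f j))"
    using assms by (simp add: sum_ennreal[symmetric] ennreal_mult mult.commute)
  also have "\<dots> \<le> (\<integral>\<^sup>+x. ennreal (w x) * ennreal (f x) \<partial>count_space UNIV)"
    by (rule sum_le_nn_count[OF assms(1)])
  finally show ?thesis by (simp add: disc_nn)
qed

lemma disc_int_le:
  assumes "\<And>x. w x \<ge> 0" "\<And>x. f x \<ge> 0" "\<And>J. finite J \<Longrightarrow> (\<Sum>j\<in>J. f j * w j) \<le> B"
  shows "(\<integral>\<^sup>+x. ennreal (f x) \<partial>disc_measure w) \<le> ennreal B"
  unfolding disc_nn
proof (rule nn_count_le)
  fix J :: "'a set" assume J: "finite J"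
  have "(\<Sum>j\<in>J. ennreal (w j) * ennreal (f j)) = ennreal (\<Sum>j\<in>J. f j * w j)"
    using assms by (simp add: sum_ennreal[symmetric] ennreal_mult mult.commute)
  also have "\<dots> \<le> ennreal B" using assms(3)[OF J] by (rule ennreal_leI)
  finally show "(\<Sum>j\<in>J. ennreal (w j) * ennreal (f j)) \<le> ennreal B" .
qed

lemma epow_fin: "0 \<le> x \<Longrightarrow> epow (ennreal x) r = ennreal (x powr r)"
  by (simp add: epow_def)

lemma epow_top[simp]: "epow top r = top"
  by (simp add: epow_def)

lemma epow_le_iff:
  assumes "A \<ge> 0" "q > 0"
  shows "epow I (1 / q) \<le> ennreal A \<longleftrightarrow> I \<le> ennreal (A powr q)"
proof (cases I)
  case (real x)
  then have "epow I (1/q) \<le> ennreal A \<longleftrightarrow> x powr (1/q) \<le> A" using assms by (simp add: epow_fin ennreal_le_iff)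
  also have "\<dots> \<longleftrightarrow> x \<le> A powr q"
  proof
    assume "x powr (1/q) \<le> A"
    then have "(x powr (1/q)) powr q \<le> A powr q" using assms by (intro powr_mono2) auto
    then show "x \<le> A powr q" using real assms by (simp add: powr_powr)
  next
    assume "x \<le> A powr q"
    then have "x powr (1/q) \<le> (A powr q) powr (1/q)" using assms real by (intro powr_mono2) auto
    then show "x powr (1/q) \<le> A" using assms by (simp add: powr_powr)
  qed
  also have "\<dots> \<longleftrightarrow> I \<le> ennreal (A powr q)" using real by (simp add: ennreal_le_iff)
  finally show ?thesis .
qed (simp add: epow_def top_unique)

lemma lim_le:
  fixes m r g L :: real
  assumes m: "m > 0" and H: "\<And>s. 0 < s \<Longrightarrow> s < m \<Longrightarrow> s powr r * g \<le> L"
  shows "m powr r * g \<le> L"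
proof (rule tendsto_le[OF trivial_limit_at_left_real])
  show "((\<lambda>s. L) \<longlongrightarrow> L) (at_left m)" by simp
  show "((\<lambda>s. s powr r * g) \<longlongrightarrow> m powr r * g) (at_left m)"
    using m by (intro tendsto_intros) auto
  show "\<forall>\<^sub>F s in at_left m. s powr r * g \<le> L"
    using eventually_at_left_real[OF m] by eventually_elim (auto intro: H)
qed

lemma p_cases:
  fixes p :: ennreal
  assumes "ennreal q < p" "1 \<le> q"
  obtains (inf) "p = \<infinity>" "enn2real (inverse p) = 0"
    | (fin) P0 where "p = ennreal P0" "q < P0" "enn2real p = P0" "enn2real (inverse p) = 1 / P0"
proof (cases p)
  case (real P0)
  then have "q < P0" using assms by (simp add: ennreal_less_iff)
  moreover have "enn2real (inverse p) = 1 / P0"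
    using real \<open>q < P0\<close> assms by (simp add: inverse_ennreal divide_inverse)
  ultimately show ?thesis using real fin by simp
next
  case top
  then show ?thesis using inf by simp
qed

lemma weak_from_P:
  fixes mu :: "'a \<Rightarrow> real" and nu :: "'b \<Rightarrow> real" and S :: "'a \<Rightarrow> 'b \<Rightarrow> real"
  assumes mupos: "\<And>i. mu i > 0" and nupos: "\<And>j. nu j > 0" and Snn: "\<And>i j. S i j \<ge> 0"
    and q: "1 \<le> q" and pq: "ennreal q < p" and A: "A > 0"
    and P: "\<And>E J. finite E \<Longrightarrow> E \<noteq> {} \<Longrightarrow> finite J \<Longrightarrow>
       \<exists>i\<in>E. sum mu E powr (q * enn2real (inverse p)) * (\<Sum>j\<in>J. S i j * nu j) \<le> A powr q"
  shows "weak_norm (disc_measure mu) p (\<lambda>i. epow (\<integral>\<^sup>+ j. ennreal (S i j) \<partial>disc_measure nu) (1/q)) \<le> ennreal A"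
proof -
  define h where "h = q * enn2real (inverse p)"
  define I where "I i = (\<integral>\<^sup>+ j. ennreal (S i j) \<partial>disc_measure nu)" for i
  define G where "G i = epow (I i) (1/q)" for i
  have full: "\<exists>i\<in>E. sum mu E powr h * enn2real (I i) \<le> A powr q \<and> I i \<noteq> \<infinity>"
    if E: "finite E" "E \<noteq> {}" for E
  proof (rule ccontr)
    assume neg: "\<not> ?thesis"
    define c where "c = sum mu E powr h"
    have sE: "sum mu E > 0" using E mupos by (simp add: sum_pos)
    then have c0: "c > 0" by (simp add: c_def)
    have "\<forall>i\<in>E. \<exists>J. finite J \<and> (\<Sum>j\<in>J. S i j * nu j) > A powr q / c"
    proof
      fix i assume iE: "i \<in> E"
      show "\<exists>J. finite J \<and> (\<Sum>j\<in>J. S i j * nu j) > A powr q / c"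
      proof (rule ccontr)
        assume "\<not> ?thesis"
        then have "\<And>J. finite J \<Longrightarrow> (\<Sum>j\<in>J. S i j * nu j) \<le> A powr q / c" by (auto simp: not_less)
        then have Ile: "I i \<le> ennreal (A powr q / c)" unfolding I_def using nupos Snn
          by (intro disc_int_le) (auto intro: less_imp_le)
        then have fin: "I i \<noteq> \<infinity>" by (auto simp: top_unique)
        have "enn2real (I i) \<le> A powr q / c" using Ile c0
          by (metis enn2real_ennreal enn2real_mono ennreal_less_top divide_nonneg_pos powr_ge_zero less_imp_le)
        then have "c * enn2real (I i) \<le> A powr q" using c0 by (simp add: field_simps)
        then show False using neg iE fin c_def by auto
      qed
    qed
    then obtain J where J: "\<And>i. i \<in> E \<Longrightarrow> finite (J i) \<and> (\<Sum>j\<in>J i. S i j * nu j) > A powr q / c"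
      by metis
    define JJ where "JJ = (\<Union>i\<in>E. J i)"
    have fJJ: "finite JJ" using E J by (auto simp: JJ_def)
    obtain i where iE: "i \<in> E" and le: "c * (\<Sum>j\<in>JJ. S i j * nu j) \<le> A powr q"
      using P[OF E fJJ] by (auto simp: c_def h_def)
    have "(\<Sum>j\<in>J i. S i j * nu j) \<le> (\<Sum>j\<in>JJ. S i j * nu j)"
      using iE J fJJ Snn nupos by (intro sum_mono2) (auto simp: JJ_def less_imp_le)
    then have "A powr q / c < (\<Sum>j\<in>JJ. S i j * nu j)" using J[OF iE] by linarith
    then have "A powr q < c * (\<Sum>j\<in>JJ. S i j * nu j)" using c0 by (simp add: field_simps)
    then show False using le by linarith
  qed
  have GG: "(\<lambda>i. epow (\<integral>\<^sup>+ j. ennreal (S i j) \<partial>disc_measure nu) (1/q)) = G"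
    by (simp add: G_def I_def fun_eq_iff)
  have Ieq: "I i = ennreal (enn2real (I i))" if "I i \<noteq> \<infinity>" for i
    using that by (cases "I i") auto
  consider (inf) "p = \<infinity>" "enn2real (inverse p) = 0"
    | (fin) P0 where "p = ennreal P0" "q < P0" "enn2real p = P0" "enn2real (inverse p) = 1 / P0"
    using p_cases[OF pq q] by metis
  then show ?thesis
  proof cases
    case inf
    then have h0: "h = 0" by (simp add: h_def)
    have "G i \<le> ennreal A" for i
    proof -
      obtain i' where "i' \<in> {i}" and le: "sum mu {i} powr h * enn2real (I i') \<le> A powr q" and fin: "I i' \<noteq> \<infinity>"
        using full[of "{i}"] by auto
      then have ii: "i' = i" by simp
      have "enn2real (I i) \<le> A powr q" using le ii h0 mupos[of i] by simp
      then have "I i \<le> ennreal (A powr q)" using Ieq[of i] fin ii by (metis ennreal_leI)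
      then show ?thesis unfolding G_def using A q by (subst epow_le_iff) auto
    qed
    then show ?thesis unfolding GG weak_norm_def using inf by (auto intro!: SUP_least)
  next
    case (fin P0)
    have P0: "P0 > 0" using fin q by simp
    have hP: "h = q / P0" using fin by (simp add: h_def)
    have hpos: "h > 0" using hP P0 q by simp
    have "ennreal (s powr (1 / P0)) * rearr (disc_measure mu) G s \<le> ennreal A" if s: "s > 0" for s
    proof -
      define lam where "lam = A * s powr (- 1 / P0)"
      have lam0: "lam > 0" using A s by (simp add: lam_def)
      have "emeasure (disc_measure mu) {x \<in> space (disc_measure mu). G x > ennreal lam} \<le> ennreal s"
      proof (rule ccontr)
        assume neg: "\<not> ?thesis"
        have "\<exists>E. finite E \<and> E \<subseteq> {x. G x > ennreal lam} \<and> sum mu E > s"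
        proof (rule ccontr)
          assume "\<not> ?thesis"
          then have "\<And>F. finite F \<Longrightarrow> F \<subseteq> {x. G x > ennreal lam} \<Longrightarrow> sum mu F \<le> s"
            by (auto simp: not_less)
          then have "emeasure (disc_measure mu) {x. G x > ennreal lam} \<le> ennreal s"
            using mupos by (intro disc_emeasure_le) (auto simp: less_imp_le)
          then show False using neg by simp
        qed
        then obtain E where E: "finite E" "E \<subseteq> {x. G x > ennreal lam}" "sum mu E > s" by blast
        then have Ene: "E \<noteq> {}" using s by auto
        obtain i where iE: "i \<in> E" and le: "sum mu E powr h * enn2real (I i) \<le> A powr q"
          and finI: "I i \<noteq> \<infinity>" using full[OF E(1) Ene] by blast
        define x where "x = enn2real (I i)"
        have x0: "x \<ge> 0" by (simp add: x_def)
        have "G i > ennreal lam" using E iE by auto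
        moreover have "G i = ennreal (x powr (1/q))"
          unfolding G_def x_def by (subst Ieq[OF finI]) (simp add: epow_fin)
        ultimately have "ennreal (x powr (1/q)) > ennreal lam" by simp
        then have xl: "x powr (1/q) > lam" using lam0 by (simp add: ennreal_less_iff)
        then have "(x powr (1/q)) powr q > lam powr q" using lam0 q by (intro powr_less_mono2) auto
        then have xgt: "x > lam powr q" using x0 q by (simp add: powr_powr)
        have lamq: "lam powr q = A powr q * s powr (- h)"
          using A s P0 by (simp add: lam_def powr_mult powr_powr hP)
        have "s powr h < sum mu E powr h" using s E(3) hpos by (intro powr_less_mono2) auto
        then have gt1: "sum mu E powr h * s powr (-h) > 1" using s by (simp add: powr_minus field_simps)
        have "A powr q < A powr q * (sum mu E powr h * s powr (-h))"
          using gt1 A by simp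
        also have "\<dots> = sum mu E powr h * lam powr q" by (simp add: lamq mult_ac)
        also have "\<dots> < sum mu E powr h * x" using xgt E(3) s by (intro mult_strict_left_mono) auto
        finally show False using le by (simp add: x_def)
      qed
      then have "rearr (disc_measure mu) G s \<le> ennreal lam"
        unfolding rearr_def using lam0 by (intro Inf_lower) auto
      then have "ennreal (s powr (1 / P0)) * rearr (disc_measure mu) G s \<le> ennreal (s powr (1 / P0)) * ennreal lam"
        by (rule mult_left_mono) simp
      also have "\<dots> = ennreal (s powr (1 / P0) * lam)" using lam0 by (simp add: ennreal_mult)
      also have "s powr (1 / P0) * lam = A" using s by (simp add: lam_def powr_minus_divide field_simps powr_add[symmetric])
      finally show ?thesis .
    qed
    then show ?thesis unfolding GG weak_norm_def using fin by (auto intro!: SUP_least)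
  qed
qed

lemma weak_to_P:
  fixes mu :: "'a \<Rightarrow> real" and nu :: "'b \<Rightarrow> real" and S :: "'a \<Rightarrow> 'b \<Rightarrow> real"
  assumes mupos: "\<And>i. mu i > 0" and nupos: "\<And>j. nu j > 0" and Snn: "\<And>i j. S i j \<ge> 0"
    and q: "1 \<le> q" and pq: "ennreal q < p" and L: "L \<ge> 0"
    and W: "weak_norm (disc_measure mu) p (\<lambda>i. epow (\<integral>\<^sup>+ j. ennreal (S i j) \<partial>disc_measure nu) (1/q)) \<le> ennreal L"
    and E: "finite E" "E \<noteq> {}" and J: "finite J"
  shows "\<exists>i\<in>E. sum mu E powr (q * enn2real (inverse p)) * (\<Sum>j\<in>J. S i j * nu j) \<le> L powr q"
proof -
  define h where "h = q * enn2real (inverse p)"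
  define I where "I i = (\<integral>\<^sup>+ j. ennreal (S i j) \<partial>disc_measure nu)" for i
  define G where "G i = epow (I i) (1/q)" for i
  have GG: "(\<lambda>i. epow (\<integral>\<^sup>+ j. ennreal (S i j) \<partial>disc_measure nu) (1/q)) = G"
    by (simp add: G_def I_def fun_eq_iff)
  have W': "weak_norm (disc_measure mu) p G \<le> ennreal L" using W unfolding GG .
  have m0: "sum mu E > 0" using E mupos by (simp add: sum_pos)
  have Ieq: "I i = ennreal (enn2real (I i))" if "I i \<noteq> \<infinity>" for i
    using that by (cases "I i") auto
  have sumJ: "(\<Sum>j\<in>J. S i j * nu j) \<le> enn2real (I i)" if fin: "I i \<noteq> \<infinity>" for i
  proof -
    have "ennreal (\<Sum>j\<in>J. S i j * nu j) \<le> I i"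
      unfolding I_def using J nupos Snn by (intro disc_int_ge_fin) (auto intro: less_imp_le)
    also have "\<dots> = ennreal (enn2real (I i))" by (rule Ieq[OF fin])
    finally show ?thesis by (simp add: ennreal_le_iff)
  qed
  have key: "\<exists>i\<in>E. I i \<noteq> \<infinity> \<and> sum mu E powr h * enn2real (I i) \<le> L powr q"
  proof -
    consider (inf) "p = \<infinity>" "enn2real (inverse p) = 0"
      | (fin) P0 where "p = ennreal P0" "q < P0" "enn2real p = P0" "enn2real (inverse p) = 1 / P0"
      using p_cases[OF pq q] by metis
    then show ?thesis
    proof cases
      case inf
      obtain i where iE: "i \<in> E" using E by blast
      have "G i \<le> weak_norm (disc_measure mu) p G" using inf by (simp add: weak_norm_def SUP_upper)
      then have "G i \<le> ennreal L" using W' by simp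
      then have Ile: "I i \<le> ennreal (L powr q)" unfolding G_def using L q by (subst (asm) epow_le_iff) auto
      then have fin: "I i \<noteq> \<infinity>" by (auto simp: top_unique)
      have "enn2real (I i) \<le> L powr q" using Ile fin Ieq[OF fin] by (metis ennreal_le_iff powr_ge_zero)
      then show ?thesis using iE fin inf m0 by (intro bexI[of _ i]) (auto simp: h_def)
    next
      case (fin P0)
      have P0: "P0 > 0" using fin q by simp
      obtain i0 where i0E: "i0 \<in> E" and i0min: "\<And>i. i \<in> E \<Longrightarrow> G i0 \<le> G i"
      proof -
        have "Min (G ` E) \<in> G ` E" using E by (intro Min_in) auto
        then obtain i0 where "i0 \<in> E" "G i0 = Min (G ` E)" by auto
        moreover have "\<And>i. i \<in> E \<Longrightarrow> Min (G ` E) \<le> G i" using E by (intro Min_le) auto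
        ultimately show ?thesis using that by metis
      qed
      define m where "m = sum mu E"
      have bound: "ennreal (s powr (1 / P0)) * G i0 \<le> ennreal L" if s: "0 < s" "s < m" for s
      proof -
        have "G i0 \<le> rearr (disc_measure mu) G s"
          unfolding rearr_def
        proof (rule Inf_greatest)
          fix l assume "l \<in> {l. 0 < l \<and> emeasure (disc_measure mu) {x \<in> space (disc_measure mu). l < G x} \<le> ennreal s}"
          then have lm: "emeasure (disc_measure mu) {x. l < G x} \<le> ennreal s" by simp
          show "G i0 \<le> l"
          proof (rule ccontr)
            assume "\<not> G i0 \<le> l"
            then have "E \<subseteq> {x. l < G x}" using i0min by (auto simp: not_le intro: less_le_trans)
            then have "ennreal (sum mu E) \<le> emeasure (disc_measure mu) {x. l < G x}"
              using E mupos by (intro disc_emeasure_ge_fin) (auto intro: less_imp_le)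
            then have "ennreal m \<le> ennreal s" using lm by (simp add: m_def)
            then show False using s by (simp add: ennreal_le_iff)
          qed
        qed
        then have "ennreal (s powr (1 / P0)) * G i0 \<le> ennreal (s powr (1 / P0)) * rearr (disc_measure mu) G s"
          by (rule mult_left_mono) simp
        also have "\<dots> \<le> weak_norm (disc_measure mu) p G"
          unfolding weak_norm_def using fin s by (auto intro!: SUP_upper2[of s])
        finally show ?thesis using W' by simp
      qed
      have m0': "m > 0" using m0 by (simp add: m_def)
      have finG: "G i0 \<noteq> \<infinity>"
      proof
        assume "G i0 = \<infinity>"
        then have "ennreal ((m/2) powr (1 / P0)) * \<infinity> \<le> ennreal L" using bound[of "m/2"] m0' by simp
        then show False using m0' by (simp add: ennreal_mult_top top_unique)
      qed
      have finI: "I i0 \<noteq> \<infinity>" using finG by (auto simp: G_def)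
      define x where "x = enn2real (I i0)"
      have x0: "x \<ge> 0" by (simp add: x_def)
      have Gx: "G i0 = ennreal (x powr (1/q))"
        unfolding G_def x_def by (subst Ieq[OF finI]) (simp add: epow_fin)
      have bnd: "s powr (1 / P0) * x powr (1/q) \<le> L" if "0 < s" "s < m" for s
      proof -
        have "ennreal (s powr (1 / P0) * x powr (1/q)) \<le> ennreal L"
          using bound[OF that] Gx by (simp add: ennreal_mult)
        then show ?thesis using L by (simp add: ennreal_le_iff)
      qed
      have "m powr (1 / P0) * x powr (1/q) \<le> L" by (rule lim_le[OF m0' bnd])
      then have "(m powr (1 / P0) * x powr (1/q)) powr q \<le> L powr q" using q by (intro powr_mono2) auto
      moreover have "(m powr (1 / P0) * x powr (1/q)) powr q = m powr h * x"
      proof -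
        have "(m powr (1 / P0) * x powr (1/q)) powr q = (m powr (1 / P0)) powr q * (x powr (1/q)) powr q"
          using m0' x0 by (intro powr_mult)
        also have "(m powr (1 / P0)) powr q = m powr h"
          unfolding powr_powr h_def using fin(4) by simp
        also have "(x powr (1/q)) powr q = x"
          unfolding powr_powr using q x0 by simp
        finally show ?thesis .
      qed
      ultimately show ?thesis using i0E finI by (auto simp: m_def x_def)
    qed
  qed
  then obtain i where iE: "i \<in> E" and fin: "I i \<noteq> \<infinity>" and le: "sum mu E powr h * enn2real (I i) \<le> L powr q"
    by blast
  have "sum mu E powr h * (\<Sum>j\<in>J. S i j * nu j) \<le> sum mu E powr h * enn2real (I i)"
    using sumJ[OF fin] by (intro mult_left_mono) auto
  then show ?thesis using le iE by (auto simp: h_def intro!: bexI[of _ i])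
qed

lemma double_int_le:
  fixes f :: "'a \<Rightarrow> 'b \<Rightarrow> real" and mu :: "'a \<Rightarrow> real" and nu :: "'b \<Rightarrow> real"
  assumes fnn: "\<And>i j. f i j \<ge> 0" and mu: "\<And>i. mu i \<ge> 0" and nu: "\<And>j. nu j \<ge> 0"
    and B: "\<And>E' F'. finite E' \<Longrightarrow> finite F' \<Longrightarrow> (\<Sum>i\<in>E'. \<Sum>j\<in>F'. f i j * mu i * nu j) \<le> B"
  shows "(\<integral>\<^sup>+ i. (\<integral>\<^sup>+ j. ennreal (f i j) \<partial>disc_measure nu) \<partial>disc_measure mu) \<le> ennreal B"
  unfolding disc_nn
proof (rule nn_count_le)
  fix E0 :: "'a set" assume E0: "finite E0"
  have "(\<Sum>i\<in>E0. ennreal (mu i) * (\<integral>\<^sup>+ j. ennreal (nu j) * ennreal (f i j) \<partial>count_space UNIV))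
      = (\<Sum>i\<in>E0. (\<integral>\<^sup>+ j. ennreal (mu i) * (ennreal (nu j) * ennreal (f i j)) \<partial>count_space UNIV))"
    by (intro sum.cong refl nn_integral_cmult[symmetric]) simp
  also have "\<dots> = (\<integral>\<^sup>+ j. (\<Sum>i\<in>E0. ennreal (mu i) * (ennreal (nu j) * ennreal (f i j))) \<partial>count_space UNIV)"
    by (rule nn_integral_sum[symmetric]) simp
  also have "\<dots> \<le> ennreal B"
  proof (rule nn_count_le)
    fix F0 :: "'b set" assume F0: "finite F0"
    have "(\<Sum>j\<in>F0. \<Sum>i\<in>E0. ennreal (mu i) * (ennreal (nu j) * ennreal (f i j)))
        = ennreal (\<Sum>j\<in>F0. \<Sum>i\<in>E0. mu i * (nu j * f i j))"
      using fnn mu nu by (simp add: sum_ennreal[symmetric] ennreal_mult sum_nonneg)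
    also have "(\<Sum>j\<in>F0. \<Sum>i\<in>E0. mu i * (nu j * f i j)) = (\<Sum>i\<in>E0. \<Sum>j\<in>F0. f i j * mu i * nu j)"
      by (subst sum.swap) (simp add: mult_ac)
    also have "ennreal \<dots> \<le> ennreal B" using B[OF E0 F0] by (rule ennreal_leI)
    finally show "(\<Sum>j\<in>F0. \<Sum>i\<in>E0. ennreal (mu i) * (ennreal (nu j) * ennreal (f i j))) \<le> ennreal B" .
  qed
  finally show "(\<Sum>i\<in>E0. ennreal (mu i) * (\<integral>\<^sup>+ j. ennreal (nu j) * ennreal (f i j) \<partial>count_space UNIV)) \<le> ennreal B" .
qed

lemma X_as_double:
  fixes W :: "'a \<Rightarrow> 'b \<Rightarrow> real"
  assumes "\<And>i j. W i j \<ge> 0"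
  shows "(\<integral>\<^sup>+ i\<in>E. (\<integral>\<^sup>+ j\<in>F. ennreal (W i j) \<partial>disc_measure nu) \<partial>disc_measure mu)
    = (\<integral>\<^sup>+ i. (\<integral>\<^sup>+ j. ennreal (W i j * indicator E i * indicator F j) \<partial>disc_measure nu) \<partial>disc_measure mu)"
proof -
  have "(\<integral>\<^sup>+ j\<in>F. ennreal (W i j) \<partial>disc_measure nu) * indicator E i
      = (\<integral>\<^sup>+ j. ennreal (W i j * indicator E i * indicator F j) \<partial>disc_measure nu)" for i
    using assms by (cases "i \<in> E") (auto intro!: nn_integral_cong simp: indicator_def ennreal_mult)
  then show ?thesis by simp
qed

lemma X_bound:
  fixes W :: "'a \<Rightarrow> 'b \<Rightarrow> real" and mu :: "'a \<Rightarrow> real" and nu :: "'b \<Rightarrow> real"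
  assumes Wnn: "\<And>i j. W i j \<ge> 0" and mu: "\<And>i. mu i \<ge> 0" and nu: "\<And>j. nu j \<ge> 0"
    and B: "\<And>E' F'. finite E' \<Longrightarrow> finite F' \<Longrightarrow> E' \<subseteq> E \<Longrightarrow> F' \<subseteq> F \<Longrightarrow> (\<Sum>i\<in>E'. \<Sum>j\<in>F'. W i j * mu i * nu j) \<le> B"
  shows "(\<integral>\<^sup>+ i\<in>E. (\<integral>\<^sup>+ j\<in>F. ennreal (W i j) \<partial>disc_measure nu) \<partial>disc_measure mu) \<le> ennreal B"
  unfolding X_as_double[OF Wnn]
proof (rule double_int_le)
  show "\<And>i j. 0 \<le> W i j * indicator E i * indicator F j" using Wnn by (simp add: indicator_def)
  fix E' :: "'a set" and F' :: "'b set" assume fE: "finite E'" and fF: "finite F'"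
  have "(\<Sum>i\<in>E'. \<Sum>j\<in>F'. W i j * indicator E i * indicator F j * mu i * nu j)
      = (\<Sum>i\<in>E'. if i \<in> E then (\<Sum>j\<in>F'. if j \<in> F then W i j * mu i * nu j else 0) else 0)"
    by (intro sum.cong refl) (auto simp: indicator_def intro!: sum.cong)
  also have "\<dots> = (\<Sum>i\<in>E' \<inter> E. \<Sum>j\<in>F' \<inter> F. W i j * mu i * nu j)"
    by (simp add: sum.inter_restrict[OF fE] sum.inter_restrict[OF fF])
  also have "\<dots> \<le> B" using fE fF by (intro B) auto
  finally show "(\<Sum>i\<in>E'. \<Sum>j\<in>F'. W i j * indicator E i * indicator F j * mu i * nu j) \<le> B" .
qed (use mu nu in auto)

lemma X_fin:
  fixes W :: "'a \<Rightarrow> 'b \<Rightarrow> real" and mu :: "'a \<Rightarrow> real" and nu :: "'b \<Rightarrow> real"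
  assumes Wnn: "\<And>i j. W i j \<ge> 0" and mu: "\<And>i. mu i \<ge> 0" and nu: "\<And>j. nu j \<ge> 0"
    and fE: "finite E" and fF: "finite F"
  shows "(\<integral>\<^sup>+ i\<in>E. (\<integral>\<^sup>+ j\<in>F. ennreal (W i j) \<partial>disc_measure nu) \<partial>disc_measure mu)
     = ennreal (\<Sum>i\<in>E. \<Sum>j\<in>F. W i j * mu i * nu j)"
proof -
  have inner: "(\<integral>\<^sup>+ j\<in>F. ennreal (W i j) \<partial>disc_measure nu) = ennreal (\<Sum>j\<in>F. W i j * nu j)" for i
  proof -
    have "(\<integral>\<^sup>+ j\<in>F. ennreal (W i j) \<partial>disc_measure nu)
        = (\<integral>\<^sup>+ j. ennreal (nu j) * (ennreal (W i j) * indicator F j) \<partial>count_space UNIV)"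
      by (simp add: disc_nn)
    also have "\<dots> = (\<Sum>j\<in>F. ennreal (nu j) * (ennreal (W i j) * indicator F j))"
      using fF by (intro nn_integral_count_space') auto
    also have "\<dots> = (\<Sum>j\<in>F. ennreal (W i j * nu j))"
      using Wnn nu by (intro sum.cong) (auto simp: ennreal_mult mult_ac)
    also have "\<dots> = ennreal (\<Sum>j\<in>F. W i j * nu j)" using Wnn nu by (simp add: sum_ennreal)
    finally show ?thesis .
  qed
  have "(\<integral>\<^sup>+ i\<in>E. (\<integral>\<^sup>+ j\<in>F. ennreal (W i j) \<partial>disc_measure nu) \<partial>disc_measure mu)
      = (\<integral>\<^sup>+ i. ennreal (mu i) * (ennreal (\<Sum>j\<in>F. W i j * nu j) * indicator E i) \<partial>count_space UNIV)"
    unfolding inner by (simp add: disc_nn)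
  also have "\<dots> = (\<Sum>i\<in>E. ennreal (mu i) * (ennreal (\<Sum>j\<in>F. W i j * nu j) * indicator E i))"
    using fE by (intro nn_integral_count_space') auto
  also have "\<dots> = (\<Sum>i\<in>E. ennreal (\<Sum>j\<in>F. W i j * mu i * nu j))"
    using Wnn nu mu by (intro sum.cong) (auto simp: ennreal_mult[symmetric] sum_nonneg sum_distrib_left mult_ac)
  also have "\<dots> = ennreal (\<Sum>i\<in>E. \<Sum>j\<in>F. W i j * mu i * nu j)"
    using Wnn nu mu by (simp add: sum_ennreal sum_nonneg)
  finally show ?thesis .
qed

lemma closed_ball_all: "(\<And>E. E \<in> A \<Longrightarrow> closed {x. P E x}) \<Longrightarrow> closed {x. \<forall>E\<in>A. P E x}"
proof -
  assume "\<And>E. E \<in> A \<Longrightarrow> closed {x. P E x}"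
  then have "closed (\<Inter>E\<in>A. {x. P E x})" by (intro closed_INT) auto
  moreover have "(\<Inter>E\<in>A. {x. P E x}) = {x. \<forall>E\<in>A. P E x}" by auto
  ultimately show ?thesis by simp
qed

lemma closed_bex: "finite A \<Longrightarrow> (\<And>i. i \<in> A \<Longrightarrow> closed {x. P i x}) \<Longrightarrow> closed {x. \<exists>i\<in>A. P i x}"
proof -
  assume "finite A" "\<And>i. i \<in> A \<Longrightarrow> closed {x. P i x}"
  then have "closed (\<Union>i\<in>A. {x. P i x})" by (intro closed_UN) auto
  moreover have "(\<Union>i\<in>A. {x. P i x}) = {x. \<exists>i\<in>A. P i x}" by auto
  ultimately show ?thesis by simp
qed

lemma compact_01: "compact (PiE UNIV (\<lambda>_::'k. {0::real, 1}))"
proof -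
  have "compactin (product_topology (\<lambda>_. euclidean) UNIV) (PiE UNIV (\<lambda>_::'k. {0::real, 1}))"
    by (subst compactin_PiE) (auto intro: finite_imp_compact)
  then show ?thesis by (simp add: euclidean_product_topology)
qed

lemma compact_select:
  fixes W :: "'a \<Rightarrow> 'b \<Rightarrow> real" and mu :: "'a \<Rightarrow> real" and nu :: "'b \<Rightarrow> real"
  assumes Wnn: "\<And>i j. W i j \<ge> 0" and mupos: "\<And>i. mu i > 0" and nupos: "\<And>j. nu j > 0"
    and hh: "h \<ge> 0" and K1: "K1 \<ge> 0" and K2: "K2 \<ge> 0"
    and H: "\<And>R C. finite R \<Longrightarrow> finite C \<Longrightarrow> hypR W mu nu h K1 K2 R C"
  shows "\<exists>x::('a \<times> 'b) \<Rightarrow> real. (\<forall>k. x k = 0 \<or> x k = 1) \<and>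
     (\<forall>E J. finite E \<longrightarrow> E \<noteq> {} \<longrightarrow> finite J \<longrightarrow>
        (\<exists>i\<in>E. sum mu E powr h * (\<Sum>j\<in>J. x (i,j) * (W i j * nu j)) \<le> K1)) \<and>
     (\<forall>F I. finite F \<longrightarrow> F \<noteq> {} \<longrightarrow> finite I \<longrightarrow>
        (\<exists>j\<in>F. sum nu F powr h * (\<Sum>i\<in>I. (1 - x (i,j)) * (W i j * mu i)) \<le> K2))"
proof -
  define S where "S IJ = {x::('a \<times> 'b) \<Rightarrow> real.
      (\<forall>E\<in>Pow (fst IJ) - {{}}. \<exists>i\<in>E. sum mu E powr h * (\<Sum>j\<in>snd IJ. x (i,j) * (W i j * nu j)) \<le> K1) \<and>
      (\<forall>F\<in>Pow (snd IJ) - {{}}. \<exists>j\<in>F. sum nu F powr h * (\<Sum>i\<in>fst IJ. (1 - x (i,j)) * (W i j * mu i)) \<le> K2)}" for IJ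
  define Ix where "Ix = {IJ :: 'a set \<times> 'b set. finite (fst IJ) \<and> finite (snd IJ)}"
  define K where "K = PiE UNIV (\<lambda>_::('a \<times> 'b). {0::real, 1})"
  have cK: "compact K" unfolding K_def by (rule compact_01)
  have clS: "closed (S IJ)" if "IJ \<in> Ix" for IJ
  proof -
    have fI: "finite (fst IJ)" and fJ: "finite (snd IJ)" using that by (auto simp: Ix_def)
    have c1: "closed {x::('a \<times> 'b) \<Rightarrow> real. \<forall>E\<in>Pow (fst IJ) - {{}}. \<exists>i\<in>E. sum mu E powr h * (\<Sum>j\<in>snd IJ. x (i,j) * (W i j * nu j)) \<le> K1}"
    proof (intro closed_ball_all closed_bex)
      fix E i assume "E \<in> Pow (fst IJ) - {{}}"
      then show "finite E" using fI by (auto intro: finite_subset)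
      show "closed {x::('a \<times> 'b) \<Rightarrow> real. sum mu E powr h * (\<Sum>j\<in>snd IJ. x (i,j) * (W i j * nu j)) \<le> K1}"
        by (intro closed_Collect_le continuous_intros continuous_on_product_coordinates)
    qed
    have c2: "closed {x::('a \<times> 'b) \<Rightarrow> real. \<forall>F\<in>Pow (snd IJ) - {{}}. \<exists>j\<in>F. sum nu F powr h * (\<Sum>i\<in>fst IJ. (1 - x (i,j)) * (W i j * mu i)) \<le> K2}"
    proof (intro closed_ball_all closed_bex)
      fix F j assume "F \<in> Pow (snd IJ) - {{}}"
      then show "finite F" using fJ by (auto intro: finite_subset)
      show "closed {x::('a \<times> 'b) \<Rightarrow> real. sum nu F powr h * (\<Sum>i\<in>fst IJ. (1 - x (i,j)) * (W i j * mu i)) \<le> K2}"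
        by (intro closed_Collect_le continuous_intros continuous_on_product_coordinates)
    qed
    have "S IJ = {x. \<forall>E\<in>Pow (fst IJ) - {{}}. \<exists>i\<in>E. sum mu E powr h * (\<Sum>j\<in>snd IJ. x (i,j) * (W i j * nu j)) \<le> K1}
       \<inter> {x. \<forall>F\<in>Pow (snd IJ) - {{}}. \<exists>j\<in>F. sum nu F powr h * (\<Sum>i\<in>fst IJ. (1 - x (i,j)) * (W i j * mu i)) \<le> K2}"
      unfolding S_def by auto
    then show ?thesis using c1 c2 by (simp add: closed_Int)
  qed
  have fip: "K \<inter> (\<Inter>IJ\<in>Ix'. S IJ) \<noteq> {}" if Ix': "finite Ix'" "Ix' \<subseteq> Ix" for Ix'
  proof -
    define U where "U = \<Union>(fst ` Ix')"
    define V where "V = \<Union>(snd ` Ix')"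
    have fU: "finite U" using Ix' by (auto simp: U_def Ix_def)
    have fV: "finite V" using Ix' by (auto simp: V_def Ix_def)
    obtain X where
      X1: "\<forall>E. E \<subseteq> U \<longrightarrow> E \<noteq> {} \<longrightarrow> (\<exists>i\<in>E. sum mu E powr h * (\<Sum>j\<in>V. if (i,j) \<in> X then W i j * nu j else 0) \<le> K1)"
      and X2: "\<forall>F. F \<subseteq> V \<longrightarrow> F \<noteq> {} \<longrightarrow> (\<exists>j\<in>F. sum nu F powr h * (\<Sum>i\<in>U. if (i,j) \<in> X then 0 else W i j * mu i) \<le> K2)"
      using greedy[OF Wnn mupos nupos hh K1 K2 fU fV H[OF fU fV]] by blast
    define x0 where "x0 k = (if k \<in> X then 1 else 0::real)" for k
    have "x0 \<in> K" by (simp add: K_def x0_def PiE_iff)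
    moreover have "x0 \<in> S IJ" if IJ: "IJ \<in> Ix'" for IJ
    proof -
      have IU: "fst IJ \<subseteq> U" and JV: "snd IJ \<subseteq> V" using IJ by (auto simp: U_def V_def)
      have r: "\<exists>i\<in>E. sum mu E powr h * (\<Sum>j\<in>snd IJ. x0 (i,j) * (W i j * nu j)) \<le> K1"
        if E: "E \<in> Pow (fst IJ) - {{}}" for E
      proof -
        obtain i where iE: "i \<in> E" and le: "sum mu E powr h * (\<Sum>j\<in>V. if (i,j) \<in> X then W i j * nu j else 0) \<le> K1"
          using X1 E IU by blast
        have "(\<Sum>j\<in>snd IJ. x0 (i,j) * (W i j * nu j)) = (\<Sum>j\<in>snd IJ. if (i,j) \<in> X then W i j * nu j else 0)"
          by (intro sum.cong) (auto simp: x0_def)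
        also have "\<dots> \<le> (\<Sum>j\<in>V. if (i,j) \<in> X then W i j * nu j else 0)"
          using JV fV Wnn nupos by (intro sum_mono2) (auto simp: less_imp_le)
        finally have "sum mu E powr h * (\<Sum>j\<in>snd IJ. x0 (i,j) * (W i j * nu j))
            \<le> sum mu E powr h * (\<Sum>j\<in>V. if (i,j) \<in> X then W i j * nu j else 0)"
          by (intro mult_left_mono) auto
        then show ?thesis using le iE by (intro bexI[of _ i]) auto
      qed
      have c: "\<exists>j\<in>F. sum nu F powr h * (\<Sum>i\<in>fst IJ. (1 - x0 (i,j)) * (W i j * mu i)) \<le> K2"
        if F: "F \<in> Pow (snd IJ) - {{}}" for F
      proof -
        obtain j where jF: "j \<in> F" and le: "sum nu F powr h * (\<Sum>i\<in>U. if (i,j) \<in> X then 0 else W i j * mu i) \<le> K2"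
          using X2 F JV by blast
        have "(\<Sum>i\<in>fst IJ. (1 - x0 (i,j)) * (W i j * mu i)) = (\<Sum>i\<in>fst IJ. if (i,j) \<in> X then 0 else W i j * mu i)"
          by (intro sum.cong) (auto simp: x0_def)
        also have "\<dots> \<le> (\<Sum>i\<in>U. if (i,j) \<in> X then 0 else W i j * mu i)"
          using IU fU Wnn mupos by (intro sum_mono2) (auto simp: less_imp_le)
        finally have "sum nu F powr h * (\<Sum>i\<in>fst IJ. (1 - x0 (i,j)) * (W i j * mu i))
            \<le> sum nu F powr h * (\<Sum>i\<in>U. if (i,j) \<in> X then 0 else W i j * mu i)"
          by (intro mult_left_mono) auto
        then show ?thesis using le jF by (intro bexI[of _ j]) auto
      qed
      show ?thesis unfolding S_def using r c by blast
    qed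
    ultimately show ?thesis by blast
  qed
  have "K \<inter> (\<Inter>IJ\<in>Ix. S IJ) \<noteq> {}"
    by (rule compact_imp_fip_image[OF cK clS fip]) auto
  then obtain x where xK: "x \<in> K" and xS: "\<And>IJ. IJ \<in> Ix \<Longrightarrow> x \<in> S IJ" by blast
  have x01: "\<forall>k. x k = 0 \<or> x k = 1" using xK by (auto simp: K_def PiE_iff)
  show ?thesis
  proof (intro exI[of _ x] conjI x01 allI impI)
    fix E :: "'a set" and J :: "'b set" assume "finite E" "E \<noteq> {}" "finite J"
    then show "\<exists>i\<in>E. sum mu E powr h * (\<Sum>j\<in>J. x (i,j) * (W i j * nu j)) \<le> K1"
      using xS[of "(E,J)"] by (auto simp: Ix_def S_def)
  next
    fix F :: "'b set" and I :: "'a set" assume "finite F" "F \<noteq> {}" "finite I"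
    then show "\<exists>j\<in>F. sum nu F powr h * (\<Sum>i\<in>I. (1 - x (i,j)) * (W i j * mu i)) \<le> K2"
      using xS[of "(I,F)"] by (auto simp: Ix_def S_def)
  qed
qed

lemma h_range0:
  assumes q: "1 \<le> q" and pq: "ennreal q < p"
  shows "0 \<le> q * enn2real (inverse p) \<and> q * enn2real (inverse p) < 1"
proof -
  consider (inf) "p = \<infinity>" "enn2real (inverse p) = 0"
    | (fin) P0 where "p = ennreal P0" "q < P0" "enn2real p = P0" "enn2real (inverse p) = 1 / P0"
    using p_cases[OF pq q] by metis
  then show ?thesis
  proof cases
    case inf then show ?thesis by auto
  next
    case (fin P0) then show ?thesis using q by auto
  qed
qed

lemma h_range:
  assumes q: "1 \<le> q" and pq: "ennreal q < p"
  shows "0 \<le> q * enn2real (inverse p)" "q * enn2real (inverse p) < 1"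
  using h_range0[OF q pq] by auto

lemma upper_A:
  fixes \<mu> :: "'m \<Rightarrow> real" and \<nu> :: "'n \<Rightarrow> real"
    and p :: ennreal and q t :: real and a :: "'m \<Rightarrow> 'n \<Rightarrow> real"
  assumes mupos: "\<And>i. \<mu> i > 0" and nupos: "\<And>j. \<nu> j > 0"
    and t: "t > 0" and q: "1 \<le> q" and pq: "ennreal q < p"
    and A: "A > 0" and T: "triple_norm \<mu> \<nu> p q t a \<le> ennreal A"
  shows "K_func \<mu> \<nu> p q t a \<le> ennreal (2 * A)"
proof -
  define h where "h = q * enn2real (inverse p)"
  define al where "al = 1 / q - enn2real (inverse p)"
  have hq: "al * q = 1 - h" using q by (simp add: al_def h_def field_simps)
  have h0: "h \<ge> 0" and h1: "h < 1" using h_range[OF q pq] by (auto simp: h_def)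
  define W where "W i j = \<bar>a i j\<bar> powr q" for i j
  have Wnn: "\<And>i j. W i j \<ge> 0" by (simp add: W_def)
  define K1 where "K1 = A powr q"
  define K2 where "K2 = (A / t) powr q"
  have K1: "K1 \<ge> 0" and K2: "K2 \<ge> 0" by (auto simp: K1_def K2_def)
  have H: "hypR W \<mu> \<nu> h K1 K2 R C" if fR: "finite R" and fC: "finite C" for R C
    unfolding hypR_def
  proof (intro allI impI)
    fix E F assume ER: "E \<subseteq> R" and FC: "F \<subseteq> C" and Ene: "E \<noteq> {}" and Fne: "F \<noteq> {}"
    have fE: "finite E" using ER fR finite_subset by blast
    have fF: "finite F" using FC fC finite_subset by blast
    define D where "D = (\<Sum>i\<in>E. \<Sum>j\<in>F. W i j * \<mu> i * \<nu> j)"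
    have D0: "D \<ge> 0" unfolding D_def using Wnn mupos nupos by (intro sum_nonneg mult_nonneg_nonneg) (auto intro: less_imp_le)
    define mE where "mE = sum \<mu> E"
    define nF where "nF = sum \<nu> F"
    have mE0: "mE > 0" using fE Ene mupos by (simp add: mE_def sum_pos)
    have nF0: "nF > 0" using fF Fne nupos by (simp add: nF_def sum_pos)
    have emE: "emeasure (disc_measure \<mu>) E = ennreal mE"
      unfolding mE_def by (rule disc_emeasure_fin[OF fE]) (simp add: less_imp_le mupos)
    have enF: "emeasure (disc_measure \<nu>) F = ennreal nF"
      unfolding nF_def by (rule disc_emeasure_fin[OF fF]) (simp add: less_imp_le nupos)
    have mmE: "measure (disc_measure \<mu>) E = mE"
      unfolding mE_def by (rule disc_measure_fin[OF fE]) (simp add: less_imp_le mupos)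
    have mnF: "measure (disc_measure \<nu>) F = nF"
      unfolding nF_def by (rule disc_measure_fin[OF fF]) (simp add: less_imp_le nupos)
    have X: "(\<integral>\<^sup>+ i\<in>E. (\<integral>\<^sup>+ j\<in>F. ennreal (\<bar>a i j\<bar> powr q) \<partial>disc_measure \<nu>) \<partial>disc_measure \<mu>) = ennreal D"
      unfolding D_def using X_fin[OF Wnn _ _ fE fF, of \<mu> \<nu>] mupos nupos by (simp add: W_def less_imp_le)
    define M where "M = max (mE powr al) (nF powr al / t)"
    have M0: "M > 0" using mE0 by (simp add: M_def less_max_iff_disj)
    have "ennreal (1 / M) * epow (ennreal D) (1 / q) \<le> triple_norm \<mu> \<nu> p q t a"
      unfolding triple_norm_def Let_def
      by (rule SUP_upper2[of "(E, F)"]) (use emE enF mE0 nF0 in \<open>auto simp: X mmE mnF M_def al_def\<close>)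
    then have "ennreal (1 / M) * ennreal (D powr (1/q)) \<le> ennreal A" using T D0 by (simp add: epow_fin)
    moreover have "ennreal (1 / M) * ennreal (D powr (1/q)) = ennreal (1 / M * D powr (1/q))"
      by (rule ennreal_mult[symmetric]) (use M0 in auto)
    ultimately have "ennreal (1 / M * D powr (1/q)) \<le> ennreal A" by simp
    then have "1 / M * D powr (1/q) \<le> A" using A by (simp add: ennreal_le_iff)
    then have "D powr (1/q) \<le> A * M" using M0 by (simp add: field_simps)
    then have "(D powr (1/q)) powr q \<le> (A * M) powr q" using q D0 by (intro powr_mono2) auto
    then have DA: "D \<le> (A * M) powr q" using D0 q by (simp add: powr_powr)
    show "(\<Sum>i\<in>E. \<Sum>j\<in>F. W i j * \<mu> i * \<nu> j) \<le> max (K1 * sum \<mu> E powr (1 - h)) (K2 * sum \<nu> F powr (1 - h))"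
    proof (cases "nF powr al / t \<le> mE powr al")
      case True
      then have "M = mE powr al" by (simp add: M_def)
      then have "(A * M) powr q = K1 * mE powr (1 - h)"
        using A mE0 by (simp add: K1_def powr_mult powr_powr hq[symmetric] mult.commute)
      then show ?thesis using DA by (simp add: D_def mE_def)
    next
      case False
      then have "M = nF powr al / t" by (simp add: M_def)
      then have "A * M = (A / t) * nF powr al" by simp
      then have "(A * M) powr q = ((A / t) * nF powr al) powr q" by simp
      also have "\<dots> = (A / t) powr q * (nF powr al) powr q"
        using A t by (intro powr_mult)
      also have "(nF powr al) powr q = nF powr (1 - h)" by (simp add: powr_powr hq)
      finally have "(A * M) powr q = K2 * nF powr (1 - h)" by (simp add: K2_def)
      then show ?thesis using DA by (simp add: D_def nF_def)
    qed
  qed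
  obtain x :: "('m \<times> 'n) \<Rightarrow> real" where x01: "\<forall>k. x k = 0 \<or> x k = 1"
    and xr: "\<forall>E J. finite E \<longrightarrow> E \<noteq> {} \<longrightarrow> finite J \<longrightarrow>
        (\<exists>i\<in>E. sum \<mu> E powr h * (\<Sum>j\<in>J. x (i,j) * (W i j * \<nu> j)) \<le> K1)"
    and xc: "\<forall>F I. finite F \<longrightarrow> F \<noteq> {} \<longrightarrow> finite I \<longrightarrow>
        (\<exists>j\<in>F. sum \<nu> F powr h * (\<Sum>i\<in>I. (1 - x (i,j)) * (W i j * \<mu> i)) \<le> K2)"
    using compact_select[OF Wnn mupos nupos h0 K1 K2 H] by blast
  define b where "b i j = x (i,j) * a i j" for i j
  define c where "c i j = (1 - x (i,j)) * a i j" for i j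
  have bW: "\<bar>b i j\<bar> powr q = x (i,j) * W i j" for i j
    using x01[rule_format, of "(i,j)"] by (auto simp: b_def W_def)
  have cW: "\<bar>c i j\<bar> powr q = (1 - x (i,j)) * W i j" for i j
    using x01[rule_format, of "(i,j)"] by (auto simp: c_def W_def)
  have mb: "mixed_norm \<mu> \<nu> p q b \<le> ennreal A"
    unfolding mixed_norm_def
  proof (rule weak_from_P[OF mupos nupos _ q pq A])
    fix E :: "'m set" and J :: "'n set" assume "finite E" "E \<noteq> {}" "finite J"
    then obtain i where "i \<in> E" "sum \<mu> E powr h * (\<Sum>j\<in>J. x (i,j) * (W i j * \<nu> j)) \<le> K1" using xr by blast
    then show "\<exists>i\<in>E. sum \<mu> E powr (q * enn2real (inverse p)) * (\<Sum>j\<in>J. \<bar>b i j\<bar> powr q * \<nu> j) \<le> A powr q"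
      by (intro bexI[of _ i]) (auto simp: bW h_def K1_def mult_ac)
  qed simp
  have At: "A / t > 0" using A t by simp
  have mc: "mixed_norm \<nu> \<mu> p q (\<lambda>j i. c i j) \<le> ennreal (A / t)"
    unfolding mixed_norm_def
  proof (rule weak_from_P[OF nupos mupos _ q pq At])
    fix F :: "'n set" and I :: "'m set" assume "finite F" "F \<noteq> {}" "finite I"
    then obtain j where "j \<in> F" "sum \<nu> F powr h * (\<Sum>i\<in>I. (1 - x (i,j)) * (W i j * \<mu> i)) \<le> K2" using xc by blast
    then show "\<exists>j\<in>F. sum \<nu> F powr (q * enn2real (inverse p)) * (\<Sum>i\<in>I. \<bar>c i j\<bar> powr q * \<mu> i) \<le> (A / t) powr q"
      by (intro bexI[of _ j]) (auto simp: cW h_def K2_def mult_ac)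
  qed simp
  have "K_func \<mu> \<nu> p q t a \<le> mixed_norm \<mu> \<nu> p q b + ennreal t * mixed_norm \<nu> \<mu> p q (\<lambda>j i. c i j)"
    unfolding K_func_def
    by (rule INF_lower2[of "(b, c)"]) (auto simp: b_def c_def algebra_simps)
  also have "\<dots> \<le> ennreal A + ennreal t * ennreal (A / t)"
    by (intro add_mono mult_left_mono mb mc) auto
  also have "\<dots> = ennreal (2 * A)" using A t by (simp add: ennreal_mult[symmetric] ennreal_plus[symmetric] del: ennreal_plus)
  finally show ?thesis .
qed

lemma lower_term:
  fixes \<mu> :: "'m \<Rightarrow> real" and \<nu> :: "'n \<Rightarrow> real"
    and p :: ennreal and q t :: real and a b c :: "'m \<Rightarrow> 'n \<Rightarrow> real"
  assumes mupos: "\<And>i. \<mu> i > 0" and nupos: "\<And>j. \<nu> j > 0"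
    and t: "t > 0" and q: "1 \<le> q" and pq: "ennreal q < p"
    and ab: "\<And>i j. a i j = b i j + c i j"
    and E: "0 < emeasure (disc_measure \<mu>) E" "emeasure (disc_measure \<mu>) E < \<infinity>"
    and F: "0 < emeasure (disc_measure \<nu>) F" "emeasure (disc_measure \<nu>) F < \<infinity>"
  shows "ennreal ((1 - q * enn2real (inverse p)) powr (1 / q)) *
      (ennreal (1 / max (measure (disc_measure \<mu>) E powr (1 / q - enn2real (inverse p)))
                        (measure (disc_measure \<nu>) F powr (1 / q - enn2real (inverse p)) / t))
       * epow (\<integral>\<^sup>+ i\<in>E. (\<integral>\<^sup>+ j\<in>F. ennreal (\<bar>a i j\<bar> powr q) \<partial>disc_measure \<nu>) \<partial>disc_measure \<mu>) (1 / q))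
    \<le> mixed_norm \<mu> \<nu> p q b + ennreal t * mixed_norm \<nu> \<mu> p q (\<lambda>j i. c i j)"
proof (cases "mixed_norm \<mu> \<nu> p q b = \<infinity> \<or> mixed_norm \<nu> \<mu> p q (\<lambda>j i. c i j) = \<infinity>")
  case True
  then show ?thesis using t by (auto simp: ennreal_mult_top)
next
  case False
  then obtain lb lc where lb: "lb \<ge> 0" "mixed_norm \<mu> \<nu> p q b = ennreal lb"
    and lc: "lc \<ge> 0" "mixed_norm \<nu> \<mu> p q (\<lambda>j i. c i j) = ennreal lc"
    by (metis ennreal_cases infinity_ennreal_def)
  define h where "h = q * enn2real (inverse p)"
  define al where "al = 1 / q - enn2real (inverse p)"
  have hq: "al * q = 1 - h" using q by (simp add: al_def h_def field_simps)
  have h0: "h \<ge> 0" and h1: "h < 1" using h_range[OF q pq] by (auto simp: h_def)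
  define mE where "mE = measure (disc_measure \<mu>) E"
  define nF where "nF = measure (disc_measure \<nu>) F"
  have emE: "emeasure (disc_measure \<mu>) E = ennreal mE"
    using E by (simp add: mE_def emeasure_eq_ennreal_measure)
  have enF: "emeasure (disc_measure \<nu>) F = ennreal nF"
    using F by (simp add: nF_def emeasure_eq_ennreal_measure)
  have mE0: "mE > 0" using E emE by simp
  have nF0: "nF > 0" using F enF by (simp add: nF_def)
  have Pb: "\<exists>i\<in>E'. sum \<mu> E' powr h * (\<Sum>j\<in>J. \<bar>b i j\<bar> powr q * \<nu> j) \<le> lb powr q"
    if "finite E'" "E' \<noteq> {}" "finite J" for E' J
    unfolding h_def
    by (rule weak_to_P[OF mupos nupos _ q pq lb(1) _ that]) (use lb(2) in \<open>simp_all add: mixed_norm_def\<close>)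
  have Pc: "\<exists>j\<in>F'. sum \<nu> F' powr h * (\<Sum>i\<in>I. \<bar>c i j\<bar> powr q * \<mu> i) \<le> lc powr q"
    if "finite F'" "F' \<noteq> {}" "finite I" for F' I
    unfolding h_def
    by (rule weak_to_P[OF nupos mupos _ q pq lc(1) _ that]) (use lc(2) in \<open>simp_all add: mixed_norm_def\<close>)
  have Cb: "(\<Sum>i\<in>E'. \<Sum>j\<in>F'. \<bar>b i j\<bar> powr q * \<mu> i * \<nu> j) \<le> lb powr q * mE powr (1 - h) / (1 - h)"
    if fE': "finite E'" "E' \<subseteq> E" and fF': "finite F'" for E' F'
  proof -
    have "(\<Sum>i\<in>E'. \<Sum>j\<in>F'. \<bar>b i j\<bar> powr q * \<mu> i * \<nu> j) = (\<Sum>i\<in>E'. \<mu> i * (\<Sum>j\<in>F'. \<bar>b i j\<bar> powr q * \<nu> j))"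
      by (simp add: sum_distrib_left mult_ac)
    also have "\<dots> \<le> lb powr q * sum \<mu> E' powr (1 - h) / (1 - h)"
      by (rule FI[OF mupos _ h0 h1 _ fE'(1)]) (auto intro!: sum_nonneg simp: less_imp_le nupos intro: Pb[OF _ _ fF'])
    also have "\<dots> \<le> lb powr q * mE powr (1 - h) / (1 - h)"
    proof -
      have "ennreal (sum \<mu> E') \<le> ennreal mE"
        using disc_emeasure_ge_fin[OF fE', of \<mu>] mupos emE by (simp add: less_imp_le)
      then have "sum \<mu> E' \<le> mE" using mE0 by (simp add: ennreal_le_iff)
      then have "sum \<mu> E' powr (1 - h) \<le> mE powr (1 - h)"
        using h1 mupos by (intro powr_mono2) (auto intro: sum_nonneg less_imp_le)
      then show ?thesis using h1 by (intro divide_right_mono mult_left_mono) auto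
    qed
    finally show ?thesis .
  qed
  have Cc: "(\<Sum>i\<in>E'. \<Sum>j\<in>F'. \<bar>c i j\<bar> powr q * \<mu> i * \<nu> j) \<le> lc powr q * nF powr (1 - h) / (1 - h)"
    if fE': "finite E'" and fF': "finite F'" "F' \<subseteq> F" for E' F'
  proof -
    have "(\<Sum>i\<in>E'. \<Sum>j\<in>F'. \<bar>c i j\<bar> powr q * \<mu> i * \<nu> j) = (\<Sum>j\<in>F'. \<nu> j * (\<Sum>i\<in>E'. \<bar>c i j\<bar> powr q * \<mu> i))"
      by (subst sum.swap) (simp add: sum_distrib_left mult_ac)
    also have "\<dots> \<le> lc powr q * sum \<nu> F' powr (1 - h) / (1 - h)"
      by (rule FI[OF nupos _ h0 h1 _ fF'(1)]) (auto intro!: sum_nonneg simp: less_imp_le mupos intro: Pc[OF _ _ fE'])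
    also have "\<dots> \<le> lc powr q * nF powr (1 - h) / (1 - h)"
    proof -
      have "ennreal (sum \<nu> F') \<le> ennreal nF"
        using disc_emeasure_ge_fin[OF fF', of \<nu>] nupos enF by (simp add: less_imp_le)
      then have "sum \<nu> F' \<le> nF" using nF0 by (simp add: ennreal_le_iff)
      then have "sum \<nu> F' powr (1 - h) \<le> nF powr (1 - h)"
        using h1 nupos by (intro powr_mono2) (auto intro: sum_nonneg less_imp_le)
      then show ?thesis using h1 by (intro divide_right_mono mult_left_mono) auto
    qed
    finally show ?thesis .
  qed
  define C where "C = (1 - h) powr (1 / q)"
  have C0: "C > 0" using h1 by (simp add: C_def)
  have Cq: "C powr q = 1 - h" using h1 q by (simp add: C_def powr_powr)
  define Pp where "Pp = lb * mE powr al / C"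
  define Qq where "Qq = lc * nF powr al / C"
  have Pp0: "Pp \<ge> 0" using lb C0 by (simp add: Pp_def)
  have Qq0: "Qq \<ge> 0" using lc C0 by (simp add: Qq_def)
  have Ppq: "Pp powr q = lb powr q * mE powr (1 - h) / (1 - h)"
  proof -
    have "Pp powr q = (lb * mE powr al) powr q / C powr q"
      unfolding Pp_def using lb C0 by (auto intro!: powr_divide)
    also have "(lb * mE powr al) powr q = lb powr q * (mE powr al) powr q"
      using lb by (auto intro!: powr_mult)
    also have "(mE powr al) powr q = mE powr (1 - h)" by (simp add: powr_powr hq)
    finally show ?thesis by (simp add: Cq)
  qed
  have Qqq: "Qq powr q = lc powr q * nF powr (1 - h) / (1 - h)"
  proof -
    have "Qq powr q = (lc * nF powr al) powr q / C powr q"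
      unfolding Qq_def using lc C0 by (auto intro!: powr_divide)
    also have "(lc * nF powr al) powr q = lc powr q * (nF powr al) powr q"
      using lc by (auto intro!: powr_mult)
    also have "(nF powr al) powr q = nF powr (1 - h)" by (simp add: powr_powr hq)
    finally show ?thesis by (simp add: Cq)
  qed
  have Xle: "(\<integral>\<^sup>+ i\<in>E. (\<integral>\<^sup>+ j\<in>F. ennreal (\<bar>a i j\<bar> powr q) \<partial>disc_measure \<nu>) \<partial>disc_measure \<mu>)
      \<le> ennreal ((Pp + Qq) powr q)"
  proof (rule X_bound)
    fix E' F' assume fE': "finite E'" and fF': "finite F'" and sE: "E' \<subseteq> E" and sF: "F' \<subseteq> F"
    have eqs: "(\<Sum>i\<in>E'. \<Sum>j\<in>F'. g i j) = (\<Sum>k\<in>E' \<times> F'. g (fst k) (snd k))" for g :: "'m \<Rightarrow> 'n \<Rightarrow> real"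
      by (simp add: sum.cartesian_product split_def)
    have "(\<Sum>k\<in>E' \<times> F'. (\<mu> (fst k) * \<nu> (snd k)) * \<bar>b (fst k) (snd k) + c (fst k) (snd k)\<bar> powr q) \<le> (Pp + Qq) powr q"
    proof (rule minkowski_fin[OF _ _ q Pp0 Qq0])
      show "finite (E' \<times> F')" using fE' fF' by simp
      show "\<And>k. 0 \<le> \<mu> (fst k) * \<nu> (snd k)" using mupos nupos by (simp add: less_imp_le)
      have "(\<Sum>k\<in>E' \<times> F'. \<mu> (fst k) * \<nu> (snd k) * \<bar>b (fst k) (snd k)\<bar> powr q)
          = (\<Sum>i\<in>E'. \<Sum>j\<in>F'. \<bar>b i j\<bar> powr q * \<mu> i * \<nu> j)"
        by (simp add: eqs mult_ac)
      also have "\<dots> \<le> Pp powr q" using Cb[OF fE' sE fF'] Ppq by simp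
      finally show "(\<Sum>k\<in>E' \<times> F'. \<mu> (fst k) * \<nu> (snd k) * \<bar>b (fst k) (snd k)\<bar> powr q) \<le> Pp powr q" .
      have "(\<Sum>k\<in>E' \<times> F'. \<mu> (fst k) * \<nu> (snd k) * \<bar>c (fst k) (snd k)\<bar> powr q)
          = (\<Sum>i\<in>E'. \<Sum>j\<in>F'. \<bar>c i j\<bar> powr q * \<mu> i * \<nu> j)"
        by (simp add: eqs mult_ac)
      also have "\<dots> \<le> Qq powr q" using Cc[OF fE' fF' sF] Qqq by simp
      finally show "(\<Sum>k\<in>E' \<times> F'. \<mu> (fst k) * \<nu> (snd k) * \<bar>c (fst k) (snd k)\<bar> powr q) \<le> Qq powr q" .
    qed
    moreover have "(\<Sum>i\<in>E'. \<Sum>j\<in>F'. \<bar>a i j\<bar> powr q * \<mu> i * \<nu> j)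
        = (\<Sum>k\<in>E' \<times> F'. (\<mu> (fst k) * \<nu> (snd k)) * \<bar>b (fst k) (snd k) + c (fst k) (snd k)\<bar> powr q)"
      by (simp add: eqs ab mult_ac)
    ultimately show "(\<Sum>i\<in>E'. \<Sum>j\<in>F'. \<bar>a i j\<bar> powr q * \<mu> i * \<nu> j) \<le> (Pp + Qq) powr q" by simp
  qed (use mupos nupos in \<open>auto simp: less_imp_le\<close>)
  have ep: "epow (\<integral>\<^sup>+ i\<in>E. (\<integral>\<^sup>+ j\<in>F. ennreal (\<bar>a i j\<bar> powr q) \<partial>disc_measure \<nu>) \<partial>disc_measure \<mu>) (1 / q)
      \<le> ennreal (Pp + Qq)"
    using Xle Pp0 Qq0 q by (subst epow_le_iff) auto
  define M where "M = max (mE powr al) (nF powr al / t)"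
  have M0: "M > 0" using mE0 by (simp add: M_def less_max_iff_disj)
  have "ennreal C * (ennreal (1 / M) * epow (\<integral>\<^sup>+ i\<in>E. (\<integral>\<^sup>+ j\<in>F. ennreal (\<bar>a i j\<bar> powr q) \<partial>disc_measure \<nu>) \<partial>disc_measure \<mu>) (1 / q))
      \<le> ennreal C * (ennreal (1 / M) * ennreal (Pp + Qq))"
    by (intro mult_left_mono ep) auto
  also have "\<dots> = ennreal (C * (1 / M) * (Pp + Qq))"
  proof -
    have e1: "ennreal (1 / M) * ennreal (Pp + Qq) = ennreal (1 / M * (Pp + Qq))"
      by (rule ennreal_mult[symmetric]) (use M0 Pp0 Qq0 in auto)
    have e2: "ennreal C * ennreal (1 / M * (Pp + Qq)) = ennreal (C * (1 / M * (Pp + Qq)))"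
      by (rule ennreal_mult[symmetric]) (use C0 M0 Pp0 Qq0 in auto)
    show ?thesis unfolding e1 e2 by (simp add: mult.assoc)
  qed
  also have "\<dots> \<le> ennreal (lb + t * lc)"
  proof (rule ennreal_leI)
    have "C * (Pp + Qq) = lb * mE powr al + lc * nF powr al"
      using C0 by (simp add: Pp_def Qq_def field_simps)
    moreover have "lb * mE powr al \<le> lb * M" using lb by (intro mult_left_mono) (auto simp: M_def)
    moreover have "lc * nF powr al \<le> t * lc * M"
    proof -
      have "nF powr al / t \<le> M" by (simp add: M_def)
      then have "nF powr al \<le> t * M" using t by (simp add: field_simps)
      then show ?thesis using lc by (metis mult.assoc mult.commute mult_left_mono)
    qed
    ultimately have "C * (Pp + Qq) \<le> (lb + t * lc) * M" by (simp add: algebra_simps)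
    then show "C * (1 / M) * (Pp + Qq) \<le> lb + t * lc" using M0 by (simp add: field_simps)
  qed
  also have "\<dots> = mixed_norm \<mu> \<nu> p q b + ennreal t * mixed_norm \<nu> \<mu> p q (\<lambda>j i. c i j)"
    using lb lc t by (simp add: ennreal_mult ennreal_plus)
  finally show ?thesis
    by (simp add: C_def h_def M_def mE_def nF_def al_def)
qed

theorem theorem2p7:
  fixes \<mu> :: "'m \<Rightarrow> real" and \<nu> :: "'n \<Rightarrow> real"
    and p :: ennreal and q t :: real and a :: "'m \<Rightarrow> 'n \<Rightarrow> real"
  assumes "\<And>i. \<mu> i > 0" and "\<And>j. \<nu> j > 0"
    and "t > 0" and "1 \<le> q" and "ennreal q < p"
  shows "ennreal ((1 - q * enn2real (inverse p)) powr (1 / q)) * triple_norm \<mu> \<nu> p q t a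
           \<le> K_func \<mu> \<nu> p q t a
         \<and> K_func \<mu> \<nu> p q t a \<le> 2 * triple_norm \<mu> \<nu> p q t a"
proof
  note mupos = assms(1) and nupos = assms(2) and t = assms(3) and q = assms(4) and pq = assms(5)
  show "ennreal ((1 - q * enn2real (inverse p)) powr (1 / q)) * triple_norm \<mu> \<nu> p q t a \<le> K_func \<mu> \<nu> p q t a"
    unfolding K_func_def
  proof (rule INF_greatest)
    fix bc assume "bc \<in> {(b, c). \<forall>i j. a i j = b i j + c i j}"
    then obtain b c where bc: "bc = (b, c)" and ab: "\<And>i j. a i j = b i j + c i j" by auto
    show "ennreal ((1 - q * enn2real (inverse p)) powr (1 / q)) * triple_norm \<mu> \<nu> p q t a
        \<le> mixed_norm \<mu> \<nu> p q (fst bc) + ennreal t * mixed_norm \<nu> \<mu> p q (\<lambda>j i. snd bc i j)"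
      unfolding triple_norm_def Let_def SUP_mult_left_ennreal bc fst_conv snd_conv
      by (rule SUP_least) (auto intro!: lower_term[OF mupos nupos t q pq ab])
  qed
  show "K_func \<mu> \<nu> p q t a \<le> 2 * triple_norm \<mu> \<nu> p q t a"
  proof (cases "triple_norm \<mu> \<nu> p q t a")
    case top
    then show ?thesis by simp
  next
    case (real a0)
    show ?thesis
    proof (rule ennreal_le_epsilon)
      fix e :: real assume e: "0 < e"
      have "K_func \<mu> \<nu> p q t a \<le> ennreal (2 * (a0 + e / 2))"
        by (rule upper_A[OF mupos nupos t q pq]) (use real e in auto)
      also have "\<dots> = 2 * triple_norm \<mu> \<nu> p q t a + ennreal e"
      proof -
        have a00: "a0 \<ge> 0" using real by simp
        have "ennreal (2 * (a0 + e / 2)) = ennreal (2 * a0) + ennreal e"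
          using a00 e by (subst ennreal_plus[symmetric]) (auto simp: algebra_simps)
        also have "ennreal (2 * a0) = 2 * ennreal a0"
          using a00 by (simp add: ennreal_mult)
        finally show ?thesis using real by simp
      qed
      finally show "K_func \<mu> \<nu> p q t a \<le> 2 * triple_norm \<mu> \<nu> p q t a + ennreal e" .
    qed
  qed
qed

end
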